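(* Let $p\ge7$, $1\le a\le p-4$, $s_\varepsilon\in\{0,\dots,p-2\}$. There exist constants $C_1,C_2,C_3>0$ (independent of $k$ and $l$) such that for every $k=k_\bullet(p-1)+k_\varepsilon$ and every $l\in\{1,\dots,\frac12d_k^{\mathrm{new}}\}$, $$0\le-(C_2+C_3(\log_pl)^2)+(p+1)l\le\frac{2(p+1)}{p-1}\bigl(\Delta_{k,l}-\Delta_{k,l-1}\bigr)\le(p+1)l+C_1(\log_pk)^2.$$
   Context: $v_p(p)=1$. $\{m\}\in\{0,\dots,p-2\}$ is the residue of $m$ mod $p-1$. $k_\varepsilon=2+\{a+2s_\varepsilon\}$, $\delta_\varepsilon=\lfloor(s_\varepsilon+\{a+s_\varepsilon\})/(p-1)\rfloor$; if $a+s_\varepsilon<p-1$, $t_1=s_\varepsilon+\delta_\varepsilon$, $t_2=a+s_\varepsilon+\delta_\varepsilon+2$; else $t_1=\{a+s_\varepsilon\}+\delta_\varepsilon+1$, $t_2=a+s_\varepsilon+\delta_\varepsilon+1$. For $k\ge2$, $k=k_\bullet(p-1)+k_\varepsilon$: $d_k^{\mathrm{Iw}}=2k_\bullet+2-2\delta_\varepsilon$; $d_k^{\mathrm{ur}}=2\lfloor(k_\bullet-t_1)/(p+1)\rfloor+1+\eta_k$ ($\eta_k=1$ if $k_\bullet-(p+1)\lfloor(k_\bullet-t_1)/(p+1)\rfloor\ge t_2$, else $0$); $d_k^{\mathrm{new}}=d_k^{\mathrm{Iw}}-2d_k^{\mathrm{ur}}$. $w_k=\exp(p(k-2))-1$.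 For $n\ge1$, $m_n(k)=\min\{n-d_k^{\mathrm{ur}},d_k^{\mathrm{Iw}}-d_k^{\mathrm{ur}}-n\}$ if $d_k^{\mathrm{ur}}<n<d_k^{\mathrm{Iw}}-d_k^{\mathrm{ur}}$, else $0$; $g_n(w)=\prod_{k\ge2,\,k\equiv k_\varepsilon}(w-w_k)^{m_n(k)}$; $g_{n,\hat k}=g_n/(w-w_k)^{m_n(k)}$; $\Delta'_{k,l}=v_p(g_{\frac12d_k^{\mathrm{Iw}}+l,\hat k}(w_k))-\frac{k-2}{2}l$ for $|l|\le\frac12d_k^{\mathrm{new}}$; $\Delta_{k,l}$ is the value at $l$ of the lower convex hull of the points $(l,\Delta'_{k,l})$. *)

theory Defs
  imports "HOL-Analysis.Analysis" "HOL-Computational_Algebra.Computational_Algebra"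
begin

text \<open>Parameters: prime p, a, s = s_eps. Weights k = kb*(p-1) + k_eps are indexed by kb (k_bullet).\<close>

definition resid :: "nat \<Rightarrow> int \<Rightarrow> int" where
  "resid p m = m mod (int p - 1)"

definition k_eps :: "nat \<Rightarrow> nat \<Rightarrow> nat \<Rightarrow> int" where
  "k_eps p a s = 2 + resid p (int a + 2 * int s)"

definition delta_eps :: "nat \<Rightarrow> nat \<Rightarrow> nat \<Rightarrow> int" where
  "delta_eps p a s = (int s + resid p (int a + int s)) div (int p - 1)"

definition t1 :: "nat \<Rightarrow> nat \<Rightarrow> nat \<Rightarrow> int" where
  "t1 p a s = (if a + s < p - 1 then int s + delta_eps p a s
               else resid p (int a + int s) + delta_eps p a s + 1)"

definition t2 :: "nat \<Rightarrow> nat \<Rightarrow> nat \<Rightarrow> int" where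
  "t2 p a s = (if a + s < p - 1 then int a + int s + delta_eps p a s + 2
               else int a + int s + delta_eps p a s + 1)"

definition wt :: "nat \<Rightarrow> nat \<Rightarrow> nat \<Rightarrow> nat \<Rightarrow> int" where
  "wt p a s kb = int kb * (int p - 1) + k_eps p a s"

definition d_Iw :: "nat \<Rightarrow> nat \<Rightarrow> nat \<Rightarrow> nat \<Rightarrow> int" where
  "d_Iw p a s kb = 2 * int kb + 2 - 2 * delta_eps p a s"

definition d_ur :: "nat \<Rightarrow> nat \<Rightarrow> nat \<Rightarrow> nat \<Rightarrow> int" where
  "d_ur p a s kb =
     (let q = (int kb - t1 p a s) div (int p + 1);
          eta = (if int kb - (int p + 1) * q \<ge> t2 p a s then 1 else 0)
      in 2 * q + 1 + eta)"

definition d_new :: "nat \<Rightarrow> nat \<Rightarrow> nat \<Rightarrow> nat \<Rightarrow> int" where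
  "d_new p a s kb = d_Iw p a s kb - 2 * d_ur p a s kb"

definition m_n :: "nat \<Rightarrow> nat \<Rightarrow> nat \<Rightarrow> int \<Rightarrow> nat \<Rightarrow> int" where
  "m_n p a s n kb =
     (if d_ur p a s kb < n \<and> n < d_Iw p a s kb - d_ur p a s kb
      then min (n - d_ur p a s kb) (d_Iw p a s kb - d_ur p a s kb - n) else 0)"

text \<open>v_p(g_{n,hat k}(w_k)) = sum over k' ~= k of m_n(k') * v_p(w_k - w_k'),
  where v_p(w_k - w_k') = v_p(exp(p(k-2)) - exp(p(k'-2))) = 1 + v_p(k - k').\<close>
definition vp_g_hat :: "nat \<Rightarrow> nat \<Rightarrow> nat \<Rightarrow> int \<Rightarrow> nat \<Rightarrow> int" where
  "vp_g_hat p a s n kb =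
     (\<Sum>kb' \<in> {kb'. kb' \<noteq> kb \<and> m_n p a s n kb' \<noteq> 0}.
        m_n p a s n kb' * (1 + int (multiplicity (int p) (wt p a s kb - wt p a s kb'))))"

definition Delta' :: "nat \<Rightarrow> nat \<Rightarrow> nat \<Rightarrow> nat \<Rightarrow> int \<Rightarrow> real" where
  "Delta' p a s kb l =
     real_of_int (vp_g_hat p a s (d_Iw p a s kb div 2 + l) kb)
     - (real_of_int (wt p a s kb) - 2) / 2 * real_of_int l"

definition lower_hull_val :: "(real \<times> real) set \<Rightarrow> real \<Rightarrow> real" where
  "lower_hull_val S x = Inf {y. (x, y) \<in> convex hull S}"

definition Delta :: "nat \<Rightarrow> nat \<Rightarrow> nat \<Rightarrow> nat \<Rightarrow> int \<Rightarrow> real" where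
  "Delta p a s kb l =
     lower_hull_val
       {(real_of_int l', Delta' p a s kb l') | l'. \<bar>l'\<bar> \<le> d_new p a s kb div 2}
       (real_of_int l)"

end

theory Submission
  imports Defs
begin

definition Vf :: "int \<Rightarrow> int \<Rightarrow> int" where
  "Vf p m = (\<Sum>i\<in>{1..nat m}. m div p ^ i)"

definition Tf :: "int \<Rightarrow> int \<Rightarrow> nat" where
  "Tf p m = card {i\<in>{1..nat m}. p ^ i \<le> m}"

lemma le_div_iff_int: assumes q: "0 < (q::int)" shows "(x \<le> m div q) = (x * q \<le> m)"
proof
  assume "x \<le> m div q"
  hence "x * q \<le> (m div q) * q" using q by (simp add: mult_right_mono)
  also have "\<dots> \<le> m" using q pos_mod_sign[OF q, of m] div_mult_mod_eq[of m q] by linarith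
  finally show "x * q \<le> m" .
next
  assume "x * q \<le> m"
  hence "(x * q) div q \<le> m div q" using q zdiv_mono1 by blast
  thus "x \<le> m div q" using q by simp
qed

lemma zdiv_le_self: "0 \<le> m \<Longrightarrow> 1 \<le> p \<Longrightarrow> (m::int) div p \<le> m"
  using zdiv_mono2[of m 1 p] by simp

lemma pow_gt_idx: fixes p :: int assumes "p \<ge> 2" shows "int i < p ^ i"
proof -
  have "i < 2 ^ i" by (rule less_exp)
  hence "int i < 2 ^ i" by (metis of_nat_less_iff of_nat_numeral of_nat_power)
  also have "(2::int) ^ i \<le> p ^ i" using assms by (intro power_mono) auto
  finally show ?thesis .
qed

lemma VB: assumes p: "p \<ge> 2" and m: "m \<ge> 0" and B: "nat m \<le> B"
  shows "Vf p m = (\<Sum>i\<in>{1..B}. m div p ^ i)"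
  unfolding Vf_def
proof (rule sum.mono_neutral_left)
  show "finite {1..B}" by simp
  show "{1..nat m} \<subseteq> {1..B}" using B by auto
  show "\<forall>i\<in>{1..B} - {1..nat m}. m div p ^ i = 0"
  proof
    fix i assume "i \<in> {1..B} - {1..nat m}"
    hence "i > nat m" by auto
    hence "m < p ^ i" using pow_gt_idx[OF p, of i] m by linarith
    thus "m div p ^ i = 0" using m by simp
  qed
qed

lemma TB: assumes p: "p \<ge> 2" and m: "m \<ge> 0" and B: "nat m \<le> B"
  shows "Tf p m = card {i\<in>{1..B}. p ^ i \<le> m}"
proof -
  have "{i\<in>{1..B}. p ^ i \<le> m} = {i\<in>{1..nat m}. p ^ i \<le> m}"
  proof (safe)
    fix i assume "i \<in> {1..B}" "p ^ i \<le> m"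
    thus "i \<in> {1..nat m}" using pow_gt_idx[OF p, of i] by auto
  qed (use B in auto)
  thus ?thesis unfolding Tf_def by simp
qed

lemma V_rec: assumes p: "p \<ge> 2" and m: "m \<ge> 0"
  shows "Vf p m = m div p + Vf p (m div p)"
proof -
  define B where "B = nat m"
  have "Vf p m = (\<Sum>i\<in>{1..Suc B}. m div p ^ i)" using VB[OF p m, of "Suc B"] B_def by simp
  also have "\<dots> = m div p ^ 1 + (\<Sum>i\<in>{Suc 1..Suc B}. m div p ^ i)"
    by (subst sum.atLeast_Suc_atMost) auto
  also have "(\<Sum>i\<in>{Suc 1..Suc B}. m div p ^ i) = (\<Sum>i\<in>{1..B}. m div p ^ Suc i)"
    by (rule sum.shift_bounds_cl_Suc_ivl)
  also have "\<dots> = (\<Sum>i\<in>{1..B}. (m div p) div p ^ i)"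
    using p by (intro sum.cong refl) (simp add: zdiv_zmult2_eq)
  also have "\<dots> = Vf p (m div p)"
  proof -
    have "m div p \<le> m" using zdiv_le_self[OF m] p by simp
    hence "nat (m div p) \<le> B" unfolding B_def by simp
    thus ?thesis using VB[OF p, of "m div p" B] p m by (simp add: pos_imp_zdiv_nonneg_iff)
  qed
  finally show ?thesis by simp
qed

lemma T_rec: assumes p: "p \<ge> 2" and m: "m \<ge> p"
  shows "Tf p m = Suc (Tf p (m div p))"
proof -
  define B where "B = nat m"
  have m0: "m \<ge> 0" using p m by simp
  have "B \<ge> 1" using p m B_def by simp
  then obtain B' where B': "B = Suc B'" by (cases B) auto
  have dm: "m div p \<le> m" using zdiv_le_self[OF m0] p by simp
  have dm0: "m div p \<ge> 0" using m0 p by (simp add: pos_imp_zdiv_nonneg_iff)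
  have "nat (m div p) \<le> B'"
  proof -
    have "m div p < m" using p m0 m by (simp add: int_div_less_self)
    thus ?thesis using B' B_def by simp
  qed
  hence T2: "Tf p (m div p) = card {i\<in>{1..B'}. p ^ i \<le> m div p}"
    using TB[OF p dm0] by simp
  have eq: "{i\<in>{1..B}. p ^ i \<le> m} = insert 1 (Suc ` {i\<in>{1..B'}. p ^ i \<le> m div p})"
  proof (safe)
    fix i assume i: "i \<in> {1..B}" "p ^ i \<le> m" "i \<notin> Suc ` {i \<in> {1..B'}. p ^ i \<le> m div p}"
    show "i = 1"
    proof (rule ccontr)
      assume "i \<noteq> 1"
      then obtain j where j: "i = Suc j" "j \<ge> 1" using i(1) by (cases i) auto
      have "p ^ j * p \<le> m" using i(2) j by (simp add: mult.commute)
      hence "p ^ j \<le> m div p" using le_div_iff_int[of p "p^j" m] p by simp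
      moreover have "j \<in> {1..B'}" using i(1) j B' by auto
      ultimately show False using i(3) j by auto
    qed
  next
    show "1 \<in> {1..B}" using \<open>B \<ge> 1\<close> by simp
    show "p ^ 1 \<le> m" using m by simp
  next
    fix j assume j: "j \<in> {1..B'}" "p ^ j \<le> m div p"
    show "Suc j \<in> {1..B}" using j B' by auto
    have "p ^ j * p \<le> m" using j(2) p le_div_iff_int[of p "p^j" m] by simp
    thus "p ^ Suc j \<le> m" by (simp add: mult.commute)
  qed
  have "Tf p m = card {i\<in>{1..B}. p ^ i \<le> m}" using TB[OF p m0] B_def by simp
  also have "\<dots> = Suc (card {i\<in>{1..B'}. p ^ i \<le> m div p})"
    unfolding eq by (subst card_insert_disjoint) (auto simp: card_image)
  finally show ?thesis using T2 by simp
qed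

lemma T_small: assumes p: "p \<ge> 2" and m: "m < p" shows "Tf p m = 0"
proof -
  have "{i\<in>{1..nat m}. p ^ i \<le> m} = {}"
  proof safe
    fix i assume "i \<in> {1..nat m}" "p ^ i \<le> m"
    moreover have "p ^ 1 \<le> p ^ i" using p \<open>i \<in> {1..nat m}\<close> by (intro power_increasing) auto
    ultimately show "i \<in> {}" using m by simp
  qed
  thus ?thesis unfolding Tf_def by simp
qed

lemma V_small: assumes p: "p \<ge> 2" and m: "m < p" "m \<ge> 0" shows "Vf p m = 0"
  using V_rec[OF p m(2)] m p by (simp add: Vf_def)

lemma div_add_le: assumes q: "0 < (q::int)" shows "a div q + b div q \<le> (a + b) div q"
proof -
  have "(a div q) * q \<le> a" "(b div q) * q \<le> b"
    using q pos_mod_sign[OF q] div_mult_mod_eq[of a q] div_mult_mod_eq[of b q] by (metis le_add_same_cancel1)+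
  hence "(a div q + b div q) * q \<le> a + b" by (simp add: distrib_right)
  thus ?thesis using le_div_iff_int[OF q] by blast
qed

lemma div_add_ge: assumes q: "0 < (q::int)" and a: "0 \<le> a" and b: "0 \<le> b"
  shows "(a + b) div q \<le> a div q + b div q + (if q \<le> a + b then 1 else 0)"
proof (cases "q \<le> a + b")
  case True
  have m1: "a mod q < q" "b mod q < q" using pos_mod_bound[OF q] by auto
  have e1: "a div q * q + a mod q = a" "b div q * q + b mod q = b" by (rule div_mult_mod_eq)+
  have e2: "(a + b) div q * q + (a + b) mod q = a + b" by (rule div_mult_mod_eq)
  have m2: "(a + b) mod q \<ge> 0" using pos_mod_sign[OF q] by simp
  have f: "(a div q + b div q + 2) * q = a div q * q + b div q * q + 2 * q" by (simp add: algebra_simps)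
  have "((a + b) div q) * q < (a div q + b div q + 2) * q"
    unfolding f using m1 e1 e2 m2 by linarith
  hence "(a + b) div q < a div q + b div q + 2" using q by (simp add: mult_less_cancel_right)
  thus ?thesis using True by simp
next
  case False
  hence "(a + b) div q = 0" using a b by simp
  moreover have "0 \<le> a div q" "0 \<le> b div q" using a b q by (simp_all add: pos_imp_zdiv_nonneg_iff)
  ultimately show ?thesis by simp
qed

lemma V_nonneg: assumes "p \<ge> 2" shows "Vf p m \<ge> 0"
  unfolding Vf_def using assms
  by (intro sum_nonneg) (auto simp: pos_imp_zdiv_nonneg_iff)

lemma V_mono: assumes p: "p \<ge> 2" and "0 \<le> a" "a \<le> b" shows "Vf p a \<le> Vf p b"
proof -
  have "Vf p a = (\<Sum>i\<in>{1..nat b}. a div p ^ i)" using VB[OF p, of a "nat b"] assms by simp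
  also have "\<dots> \<le> (\<Sum>i\<in>{1..nat b}. b div p ^ i)"
    using assms by (intro sum_mono zdiv_mono1) auto
  also have "\<dots> = Vf p b" using VB[OF p, of b "nat b"] assms by simp
  finally show ?thesis .
qed

lemma V_sup: assumes p: "p \<ge> 2" and a: "0 \<le> a" and b: "0 \<le> b"
  shows "Vf p a + Vf p b \<le> Vf p (a + b)"
proof -
  define B where "B = nat (a + b)"
  have "Vf p a + Vf p b = (\<Sum>i\<in>{1..B}. a div p ^ i + b div p ^ i)"
    using VB[OF p a, of B] VB[OF p b, of B] a b B_def by (simp add: sum.distrib)
  also have "\<dots> \<le> (\<Sum>i\<in>{1..B}. (a + b) div p ^ i)"
    using p by (intro sum_mono div_add_le) auto
  also have "\<dots> = Vf p (a + b)" using VB[OF p, of "a+b" B] a b B_def by simp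
  finally show ?thesis .
qed

lemma V_carry: assumes p: "p \<ge> 2" and a: "0 \<le> a" and b: "0 \<le> b"
  shows "Vf p (a + b) \<le> Vf p a + Vf p b + int (Tf p (a + b))"
proof -
  define B where "B = nat (a + b)"
  have "Vf p (a + b) = (\<Sum>i\<in>{1..B}. (a + b) div p ^ i)" using VB[OF p, of "a+b" B] a b B_def by simp
  also have "\<dots> \<le> (\<Sum>i\<in>{1..B}. a div p ^ i + b div p ^ i + (if p ^ i \<le> a + b then 1 else 0))"
    using p a b by (intro sum_mono div_add_ge) auto
  also have "\<dots> = Vf p a + Vf p b + (\<Sum>i\<in>{1..B}. (if p ^ i \<le> a + b then 1 else 0))"
    using VB[OF p a, of B] VB[OF p b, of B] a b B_def by (simp add: sum.distrib)
  also have "(\<Sum>i\<in>{1..B}. (if p ^ i \<le> a + b then 1 else 0)) = int (card {i\<in>{1..B}. p ^ i \<le> a + b})"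
  proof -
    have "{1..B} \<inter> {i. p ^ i \<le> a + b} = {i\<in>{1..B}. p ^ i \<le> a + b}" by auto
    thus ?thesis by (simp add: sum.If_cases)
  qed
  also have "card {i\<in>{1..B}. p ^ i \<le> a + b} = Tf p (a + b)" using TB[OF p, of "a+b" B] a b B_def by simp
  finally show ?thesis by simp
qed

lemma V_pN: assumes p: "p \<ge> 2" and N: "0 \<le> N" shows "Vf p (p * N) = N + Vf p N"
  using V_rec[of p "p * N"] p N by simp

lemma V_ub: assumes p: "p \<ge> 2" and m: "0 \<le> m" shows "real_of_int (Vf p m) \<le> real_of_int m / (real_of_int p - 1)"
  using m
proof (induction "nat m" arbitrary: m rule: less_induct)
  case less
  show ?case
  proof (cases "m < p")
    case True
    hence "Vf p m = 0" using V_small p less.prems by simp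
    thus ?thesis using less.prems p by simp
  next
    case False
    define q where "q = m div p"
    have q0: "q \<ge> 0" using less.prems p q_def by (simp add: pos_imp_zdiv_nonneg_iff)
    have qm: "q < m" using p less.prems False q_def by (simp add: int_div_less_self)
    have IH: "real_of_int (Vf p q) \<le> real_of_int q / (real_of_int p - 1)"
      using less.hyps[of q] q0 qm by simp
    have qp: "q * p \<le> m" using le_div_iff_int[of p q m] p q_def by simp
    have "Vf p m = q + Vf p q" using V_rec[OF p less.prems] q_def by simp
    hence "real_of_int (Vf p m) \<le> real_of_int q + real_of_int q / (real_of_int p - 1)" using IH by simp
    also have "\<dots> = real_of_int q * real_of_int p / (real_of_int p - 1)"
      using p by (simp add: field_simps)
    also have "\<dots> \<le> real_of_int m / (real_of_int p - 1)"
      using p qp by (intro divide_right_mono) (simp_all add: of_int_mult[symmetric] del: of_int_mult)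
    finally show ?thesis .
  qed
qed

lemma V_lb: assumes p: "p \<ge> 2" and m: "0 \<le> m"
  shows "real_of_int (Vf p m) \<ge> (real_of_int m + 1 - real_of_int p) / (real_of_int p - 1) - real (Tf p m)"
  using m
proof (induction "nat m" arbitrary: m rule: less_induct)
  case less
  show ?case
  proof (cases "m < p")
    case True
    hence "Vf p m = 0" "Tf p m = 0" using V_small T_small p less.prems by auto
    thus ?thesis using less.prems p True by (simp add: divide_nonpos_pos)
  next
    case False
    define q where "q = m div p"
    have q0: "q \<ge> 0" using less.prems p q_def by (simp add: pos_imp_zdiv_nonneg_iff)
    have qm: "q < m" using p less.prems False q_def by (simp add: int_div_less_self)
    have IH: "real_of_int (Vf p q) \<ge> (real_of_int q + 1 - real_of_int p) / (real_of_int p - 1) - real (Tf p q)"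
      using less.hyps[of q] q0 qm by simp
    have m1: "m mod p < p" using pos_mod_bound[of p m] p by simp
    have e1: "m div p * p + m mod p = m" by (rule div_mult_mod_eq)
    have f1: "(q + 1) * p = m div p * p + p" by (simp add: distrib_right q_def)
    have qp: "m < (q + 1) * p" using m1 e1 f1 q_def by linarith
    hence "m + 1 \<le> (q + 1) * p" by linarith
    hence "real_of_int (m + 1) \<le> real_of_int ((q + 1) * p)" by (simp only: of_int_le_iff)
    hence qp': "real_of_int m + 1 \<le> (real_of_int q + 1) * real_of_int p" by simp
    have V: "Vf p m = q + Vf p q" using V_rec[OF p less.prems] q_def by simp
    have T: "Tf p m = Suc (Tf p q)" using T_rec[of p m] p False q_def by simp
    have "(real_of_int m + 1 - real_of_int p) / (real_of_int p - 1) - 1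
          \<le> real_of_int q + (real_of_int q + 1 - real_of_int p) / (real_of_int p - 1)"
    proof -
      have "(real_of_int m + 1 - real_of_int p) \<le> (real_of_int q + 1 - real_of_int p) + real_of_int q * (real_of_int p - 1) + (real_of_int p - 1)"
        using qp' by (simp add: algebra_simps)
      hence "(real_of_int m + 1 - real_of_int p) / (real_of_int p - 1) \<le>
             ((real_of_int q + 1 - real_of_int p) + real_of_int q * (real_of_int p - 1) + (real_of_int p - 1)) / (real_of_int p - 1)"
        using p by (intro divide_right_mono) auto
      also have "\<dots> = (real_of_int q + 1 - real_of_int p) / (real_of_int p - 1) + real_of_int q + 1"
        using p by (simp add: field_simps)
      finally show ?thesis by simp
    qed
    thus ?thesis using IH V T by simp
  qed
qed

lemma T_mono: assumes p: "p \<ge> 2" and "0 \<le> a" "a \<le> b" shows "Tf p a \<le> Tf p b"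
proof -
  have "Tf p a = card {i\<in>{1..nat b}. p ^ i \<le> a}" using TB[OF p, of a "nat b"] assms by simp
  also have "\<dots> \<le> card {i\<in>{1..nat b}. p ^ i \<le> b}" using assms by (intro card_mono) auto
  also have "\<dots> = Tf p b" using TB[OF p, of b "nat b"] assms by simp
  finally show ?thesis .
qed

lemma T_step: assumes p: "p \<ge> 2" and a: "0 \<le> a" shows "Tf p (a + 1) \<le> Tf p a + 1"
proof -
  define B where "B = nat (a + 1)"
  have "{i\<in>{1..B}. p ^ i \<le> a + 1} \<subseteq> {i\<in>{1..B}. p ^ i \<le> a} \<union> {i\<in>{1..B}. p ^ i = a + 1}" by auto
  hence "card {i\<in>{1..B}. p ^ i \<le> a + 1} \<le> card ({i\<in>{1..B}. p ^ i \<le> a} \<union> {i\<in>{1..B}. p ^ i = a + 1})"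
    by (intro card_mono) auto
  also have "\<dots> \<le> card {i\<in>{1..B}. p ^ i \<le> a} + card {i\<in>{1..B}. p ^ i = a + 1}" by (rule card_Un_le)
  also have "card {i\<in>{1..B}. p ^ i = a + 1} \<le> 1"
  proof -
    have "\<forall>x\<in>{i\<in>{1..B}. p ^ i = a + 1}. \<forall>y\<in>{i\<in>{1..B}. p ^ i = a + 1}. x = y"
    proof (intro ballI)
      fix x y assume "x \<in> {i\<in>{1..B}. p ^ i = a + 1}" "y \<in> {i\<in>{1..B}. p ^ i = a + 1}"
      hence "p ^ x = p ^ y" by simp
      thus "x = y" using power_inject_exp[of p x y] p by simp
    qed
    thus ?thesis using card_le_Suc0_iff_eq[of "{i\<in>{1..B}. p ^ i = a + 1}"] by auto
  qed
  finally have "card {i\<in>{1..B}. p ^ i \<le> a + 1} \<le> card {i\<in>{1..B}. p ^ i \<le> a} + 1" by simp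
  moreover have "Tf p (a + 1) = card {i\<in>{1..B}. p ^ i \<le> a + 1}" using TB[OF p, of "a+1" B] a B_def by simp
  moreover have "Tf p a = card {i\<in>{1..B}. p ^ i \<le> a}" using TB[OF p, of a B] a B_def by simp
  ultimately show ?thesis by simp
qed

lemma T_diff: assumes p: "p \<ge> 2" and a: "0 \<le> a" shows "Tf p (a + int d) \<le> Tf p a + d"
proof (induction d)
  case 0 thus ?case by simp
next
  case (Suc d)
  have "Tf p (a + int (Suc d)) = Tf p ((a + int d) + 1)" by (simp add: algebra_simps)
  also have "\<dots> \<le> Tf p (a + int d) + 1" using T_step[OF p, of "a + int d"] a by simp
  finally show ?case using Suc by simp
qed

lemma T_pow: assumes p: "p \<ge> 2" and m: "1 \<le> m" shows "p ^ Tf p m \<le> m"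
  using m
proof (induction "nat m" arbitrary: m rule: less_induct)
  case less
  show ?case
  proof (cases "m < p")
    case True thus ?thesis using T_small p less.prems by simp
  next
    case False
    define q where "q = m div p"
    have q1: "q \<ge> 1" using False p q_def le_div_iff_int[of p 1 m] by simp
    have qm: "q < m" using p less.prems False q_def by (simp add: int_div_less_self)
    have IH: "p ^ Tf p q \<le> q" using less.hyps[of q] q1 qm by simp
    have qp: "q * p \<le> m" using le_div_iff_int[of p q m] p q_def by simp
    have "p ^ Tf p m = p ^ Tf p q * p" using T_rec[of p m] p False q_def by simp
    also have "\<dots> \<le> q * p" using IH p by (simp add: mult_right_mono)
    finally show ?thesis using qp by simp
  qed
qed

lemma T_log: assumes p: "p \<ge> 2" and m: "1 \<le> m" shows "real (Tf p m) \<le> log (real_of_int p) (real_of_int m)"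
proof -
  have "real_of_int (p ^ Tf p m) \<le> real_of_int m" using T_pow[OF p m] by linarith
  hence "real_of_int p ^ Tf p m \<le> real_of_int m" by simp
  hence "log (real_of_int p) (real_of_int p ^ Tf p m) \<le> log (real_of_int p) (real_of_int m)"
    using p log_le_cancel_iff[of "real_of_int p" "real_of_int p ^ Tf p m" "real_of_int m"] m by auto
  thus ?thesis using p by (simp add: log_nat_power)
qed

lemma div_succ: assumes q: "1 \<le> (q::int)" and m: "0 \<le> m"
  shows "(m + 1) div q = m div q + (if q dvd (m + 1) then 1 else 0)"
proof (cases "q = 1")
  case True thus ?thesis by simp
next
  case False
  hence q2: "q \<ge> 2" using q by simp
  have d1: "1 div q = 0" "1 mod q = 1" using q2 by simp_all
  have "(m + 1) div q = m div q + 1 div q + ((m mod q + 1 mod q) div q)" by (rule div_add1_eq)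
  hence eq: "(m + 1) div q = m div q + (m mod q + 1) div q" using d1 by simp
  have r: "0 \<le> m mod q" "m mod q < q" using q by simp_all
  show ?thesis
  proof (cases "m mod q + 1 = q")
    case True
    hence "(m mod q + 1) div q = 1" using q by simp
    moreover have "q dvd (m + 1)"
    proof -
      have "m + 1 = q * (m div q) + (m mod q + 1)" by (simp add: algebra_simps)
      also have "\<dots> = q * (m div q + 1)" using True by (simp add: algebra_simps)
      finally show ?thesis by simp
    qed
    ultimately show ?thesis using eq by simp
  next
    case False
    hence lt: "m mod q + 1 < q" using r by simp
    hence "(m mod q + 1) div q = 0" using r by simp
    moreover have "\<not> q dvd (m + 1)"
    proof
      assume "q dvd (m + 1)"
      hence "(m + 1) mod q = 0" by simp
      moreover have "(m + 1) mod q = (m mod q + 1) mod q" by (simp add: mod_add_left_eq)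
      moreover have "(m mod q + 1) mod q = m mod q + 1" using lt r by simp
      ultimately show False using r by simp
    qed
    ultimately show ?thesis using eq by simp
  qed
qed

lemma mult_le_self: assumes p: "(p::int) \<ge> 2" and x: "x \<ge> 1"
  shows "multiplicity p x \<le> nat x"
proof -
  have "p ^ multiplicity p x dvd x" by (rule multiplicity_dvd)
  hence "p ^ multiplicity p x \<le> x" using x by (simp add: zdvd_imp_le)
  moreover have "int (multiplicity p x) < p ^ multiplicity p x" by (rule pow_gt_idx[OF p])
  ultimately show ?thesis by linarith
qed

lemma V_succ: assumes p: "prime (p::int)" and m: "0 \<le> m"
  shows "Vf p (m + 1) = Vf p m + int (multiplicity p (m + 1))"
proof -
  have p2: "p \<ge> 2" using p prime_ge_2_int by blast
  define B where "B = nat (m + 1)"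
  have "Vf p (m + 1) = (\<Sum>i\<in>{1..B}. (m + 1) div p ^ i)" using VB[OF p2, of "m+1" B] m B_def by simp
  also have "\<dots> = (\<Sum>i\<in>{1..B}. m div p ^ i + (if p ^ i dvd (m + 1) then 1 else 0))"
  proof (intro sum.cong refl)
    fix i show "(m + 1) div p ^ i = m div p ^ i + (if p ^ i dvd m + 1 then 1 else 0)"
      using div_succ[of "p ^ i" m] p2 m by simp
  qed
  also have "\<dots> = Vf p m + (\<Sum>i\<in>{1..B}. (if p ^ i dvd (m + 1) then 1 else 0))"
    using VB[OF p2 m, of B] B_def by (simp add: sum.distrib)
  also have "(\<Sum>i\<in>{1..B}. (if p ^ i dvd (m + 1) then 1 else 0)) = int (card {i\<in>{1..B}. p ^ i dvd (m + 1)})"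
  proof -
    have "{1..B} \<inter> {i. p ^ i dvd (m + 1)} = {i\<in>{1..B}. p ^ i dvd (m + 1)}" by auto
    thus ?thesis by (simp add: sum.If_cases)
  qed
  also have "{i\<in>{1..B}. p ^ i dvd (m + 1)} = {1..multiplicity p (m + 1)}"
  proof -
    have nu: "\<not> is_unit p" using p not_prime_unit by blast
    have le: "multiplicity p (m + 1) \<le> B" using mult_le_self[OF p2, of "m+1"] m B_def by simp
    have x0: "m + 1 \<noteq> 0" using m by simp
    show ?thesis
    proof (intro set_eqI iffI)
      fix i assume "i \<in> {i\<in>{1..B}. p ^ i dvd (m + 1)}"
      hence "i \<ge> 1" "p ^ i dvd (m + 1)" by auto
      hence "i \<le> multiplicity p (m + 1)" using power_dvd_iff_le_multiplicity[OF x0 nu] by blast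
      thus "i \<in> {1..multiplicity p (m + 1)}" using \<open>i \<ge> 1\<close> by simp
    next
      fix i assume i: "i \<in> {1..multiplicity p (m + 1)}"
      hence "p ^ i dvd (m + 1)" using power_dvd_iff_le_multiplicity[OF x0 nu] by simp
      thus "i \<in> {i\<in>{1..B}. p ^ i dvd (m + 1)}" using i le by simp
    qed
  qed
  finally show ?thesis by simp
qed

definition Wf :: "int \<Rightarrow> int \<Rightarrow> int" where
  "Wf p m = (\<Sum>j\<in>{1..m}. 1 + int (multiplicity p j))"

lemma W_eq: assumes p: "prime (p::int)" and m: "0 \<le> m" shows "Wf p m = m + Vf p m"
proof -
  have p2: "p \<ge> 2" using p prime_ge_2_int by blast
  have "\<And>n. Wf p (int n) = int n + Vf p (int n)"
  proof -
    fix n show "Wf p (int n) = int n + Vf p (int n)"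
    proof (induction n)
      case 0 thus ?case by (simp add: Wf_def Vf_def)
    next
      case (Suc n)
      have "{1..int (Suc n)} = insert (int n + 1) {1..int n}" by auto
      hence "Wf p (int (Suc n)) = 1 + int (multiplicity p (int n + 1)) + Wf p (int n)"
        unfolding Wf_def by simp
      also have "\<dots> = int (Suc n) + Vf p (int (Suc n))"
        using Suc V_succ[OF p, of "int n"] by (simp add: add.commute)
      finally show ?case .
    qed
  qed
  thus ?thesis using m by (metis nonneg_int_cases)
qed

lemma W_nonpos: "m \<le> 0 \<Longrightarrow> Wf p m = 0" by (simp add: Wf_def)

lemma W_mono: "a \<le> b \<Longrightarrow> Wf p a \<le> Wf p b"
proof -
  assume ab: "a \<le> b"
  have "Wf p a = (\<Sum>j\<in>{1..a}. 1 + int (multiplicity p j))" by (simp add: Wf_def)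
  also have "\<dots> \<le> (\<Sum>j\<in>{1..b}. 1 + int (multiplicity p j))"
    using ab by (intro sum_mono2) auto
  finally show ?thesis by (simp add: Wf_def)
qed

definition ptsS :: "int \<Rightarrow> (int \<Rightarrow> real) \<Rightarrow> (real \<times> real) set" where
  "ptsS L D = {(real_of_int l', D l') | l'. \<bar>l'\<bar> \<le> L}"

definition minor :: "int \<Rightarrow> (int \<Rightarrow> real) \<Rightarrow> real \<Rightarrow> real \<Rightarrow> bool" where
  "minor L D \<alpha> \<beta> \<longleftrightarrow> (\<forall>l'. \<bar>l'\<bar> \<le> L \<longrightarrow> \<alpha> + \<beta> * real_of_int l' \<le> D l')"

lemma minor_hull:
  assumes "minor L D \<alpha> \<beta>" and "z \<in> convex hull (ptsS L D)"
  shows "\<alpha> + \<beta> * fst z \<le> snd z"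
proof -
  define C where "C = {z::real\<times>real. \<alpha> + \<beta> * fst z \<le> snd z}"
  have "convex C" unfolding convex_def C_def
  proof (intro ballI allI impI, simp)
    fix a b c d u v :: real
    assume h: "\<alpha> + \<beta> * a \<le> b" "\<alpha> + \<beta> * c \<le> d" "0 \<le> u" "0 \<le> v" "u + v = 1"
    have "u * (\<alpha> + \<beta> * a) \<le> u * b" using h by (simp add: mult_left_mono)
    moreover have "v * (\<alpha> + \<beta> * c) \<le> v * d" using h by (simp add: mult_left_mono)
    moreover have "\<alpha> = (u + v) * \<alpha>" using h by simp
    ultimately show "\<alpha> + \<beta> * (u * a + v * c) \<le> u * b + v * d" by (simp add: algebra_simps)
  qed
  moreover have "ptsS L D \<subseteq> C" using assms(1) unfolding ptsS_def C_def minor_def by auto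
  ultimately have "convex hull (ptsS L D) \<subseteq> C" by (rule hull_minimal[rotated])
  thus ?thesis using assms(2) C_def by auto
qed

lemma pt_in_hull: "\<bar>l0\<bar> \<le> L \<Longrightarrow> (real_of_int l0, D l0) \<in> convex hull (ptsS L D)"
  by (rule hull_inc) (auto simp: ptsS_def)

lemma minor_exists: "\<exists>\<alpha>. minor L D \<alpha> 0"
proof -
  define \<alpha> where "\<alpha> = Min (insert 0 (D ` {-L..L}))"
  have "\<forall>l'. \<bar>l'\<bar> \<le> L \<longrightarrow> \<alpha> \<le> D l'"
  proof (intro allI impI)
    fix l' :: int assume "\<bar>l'\<bar> \<le> L"
    hence "l' \<in> {-L..L}" by auto
    hence "D l' \<in> insert 0 (D ` {-L..L})" by blast
    thus "\<alpha> \<le> D l'" unfolding \<alpha>_def by (intro Min_le) auto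
  qed
  thus ?thesis unfolding minor_def by auto
qed

lemma hv_le: assumes "(x, y) \<in> convex hull (ptsS L D)" shows "lower_hull_val (ptsS L D) x \<le> y"
proof -
  obtain \<alpha> where a: "minor L D \<alpha> 0" using minor_exists by blast
  have "bdd_below {y. (x, y) \<in> convex hull (ptsS L D)}"
    using minor_hull[OF a] by (intro bdd_belowI[of _ \<alpha>]) force
  thus ?thesis unfolding lower_hull_val_def using assms by (intro cInf_lower) auto
qed

lemma hv_ge: assumes "minor L D \<alpha> \<beta>" and "\<bar>l0\<bar> \<le> L"
  shows "\<alpha> + \<beta> * real_of_int l0 \<le> lower_hull_val (ptsS L D) (real_of_int l0)"
  unfolding lower_hull_val_def
proof (rule cInf_greatest)
  show "{y. (real_of_int l0, y) \<in> convex hull ptsS L D} \<noteq> {}" using pt_in_hull[OF assms(2)] by auto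
  fix y assume "y \<in> {y. (real_of_int l0, y) \<in> convex hull ptsS L D}"
  thus "\<alpha> + \<beta> * real_of_int l0 \<le> y" using minor_hull[OF assms(1)] by force
qed

lemma hv_le_pt: "\<bar>l0\<bar> \<le> L \<Longrightarrow> lower_hull_val (ptsS L D) (real_of_int l0) \<le> D l0"
  by (rule hv_le[OF pt_in_hull])

lemma slope_key:
  fixes Di Dj m A B :: real
  assumes A: "A > 0" and B: "B > 0" and v: "m \<le> (Di * B + Dj * A) / (A + B)"
  shows "(m - Di) / A \<le> (Dj - m) / B"
proof -
  have "m * (A + B) \<le> Di * B + Dj * A" using v A B by (simp add: le_divide_eq)
  hence "(m - Di) * B \<le> (Dj - m) * A" by (simp add: algebra_simps)
  thus ?thesis using A B by (simp add: divide_simps mult.commute)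
qed

lemma comb_y: fixes a b x Da Db :: real assumes "b \<noteq> a"
  shows "(b - x) / (b - a) * Da + (1 - (b - x) / (b - a)) * Db = (Da * (b - x) + Db * (x - a)) / (b - a)"
proof -
  define t where "t = (b - x) / (b - a)"
  have d: "b - a \<noteq> 0" using assms by simp
  have t1: "t * (b - a) = b - x" unfolding t_def using d by simp
  have "(t * Da + (1 - t) * Db) * (b - a) = Db * (b - a) - t * (b - a) * (Db - Da)" by (simp add: algebra_simps)
  also have "\<dots> = Da * (b - x) + Db * (x - a)" unfolding t1 by (simp add: algebra_simps)
  finally have "(t * Da + (1 - t) * Db) * (b - a) = Da * (b - x) + Db * (x - a)" .
  hence "t * Da + (1 - t) * Db = (Da * (b - x) + Db * (x - a)) / (b - a)"
    using d by (simp add: eq_divide_eq)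
  thus ?thesis unfolding t_def .
qed

lemma comb_x: fixes a b x :: real assumes "b \<noteq> a"
  shows "(b - x) / (b - a) * a + (1 - (b - x) / (b - a)) * b = x"
proof -
  have "(b - x) / (b - a) * a + (1 - (b - x) / (b - a)) * b = (a * (b - x) + b * (x - a)) / (b - a)"
    by (rule comb_y[OF assms])
  also have "a * (b - x) + b * (x - a) = x * (b - a)" by (simp add: algebra_simps)
  finally show ?thesis using assms by simp
qed

lemma supp:
  assumes x0: "\<bar>x0\<bar> \<le> L"
  shows "\<exists>\<alpha> \<beta>. minor L D \<alpha> \<beta> \<and> lower_hull_val (ptsS L D) (real_of_int x0) = \<alpha> + \<beta> * real_of_int x0"
proof -
  define PR where "PR = {-L..x0} \<times> {x0..L}"
  define val where "val = (\<lambda>(i,j). if i = j then D i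
     else (D i * real_of_int (j - x0) + D j * real_of_int (x0 - i)) / real_of_int (j - i))"
  define m where "m = Min (val ` PR)"
  have fin: "finite PR" unfolding PR_def by simp
  have ne: "(x0, x0) \<in> PR" using x0 unfolding PR_def by auto
  have mle: "\<And>ij. ij \<in> PR \<Longrightarrow> m \<le> val ij" unfolding m_def using fin by (intro Min_le) auto
  have "m \<in> val ` PR" unfolding m_def using fin ne by (intro Min_in) auto
  then obtain i0 j0 where ij0: "(i0, j0) \<in> PR" "val (i0, j0) = m" by auto
  have inh: "(real_of_int x0, m) \<in> convex hull (ptsS L D)"
  proof (cases "i0 = j0")
    case True
    hence "i0 = x0" using ij0 unfolding PR_def by auto
    hence "m = D x0" using ij0 True unfolding val_def by simp
    thus ?thesis using pt_in_hull[OF x0] by simp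
  next
    case False
    hence lt: "i0 < j0" using ij0 unfolding PR_def by auto
    have i0r: "\<bar>i0\<bar> \<le> L" "\<bar>j0\<bar> \<le> L" "i0 \<le> x0" "x0 \<le> j0" using ij0 x0 unfolding PR_def by auto
    define \<theta> where "\<theta> = real_of_int (j0 - x0) / real_of_int (j0 - i0)"
    have th: "0 \<le> \<theta>" "0 \<le> 1 - \<theta>" using lt i0r unfolding \<theta>_def by (auto simp: divide_simps)
    have "\<theta> *\<^sub>R (real_of_int i0, D i0) + (1 - \<theta>) *\<^sub>R (real_of_int j0, D j0) \<in> convex hull (ptsS L D)"
      using th pt_in_hull[OF i0r(1)] pt_in_hull[OF i0r(2)]
      by (intro convexD[OF convex_convex_hull]) auto
    moreover have "\<theta> *\<^sub>R (real_of_int i0, D i0) + (1 - \<theta>) *\<^sub>R (real_of_int j0, D j0) = (real_of_int x0, m)"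
    proof -
      have d: "real_of_int (j0 - i0) \<noteq> 0" using lt by simp
      have "\<theta> * real_of_int i0 + (1 - \<theta>) * real_of_int j0 = real_of_int x0"
        unfolding \<theta>_def using comb_x[of "real_of_int j0" "real_of_int i0" "real_of_int x0"] lt by simp
      moreover have "\<theta> * D i0 + (1 - \<theta>) * D j0 = m"
        using ij0(2) False lt comb_y[of "real_of_int j0" "real_of_int i0" "real_of_int x0" "D i0" "D j0"]
        unfolding \<theta>_def val_def by simp
      ultimately show ?thesis by simp
    qed
    ultimately show ?thesis by simp
  qed
  define LS where "LS = (\<lambda>i. (m - D i) / real_of_int (x0 - i)) ` {-L..x0-1}"
  define RS where "RS = (\<lambda>j. (D j - m) / real_of_int (j - x0)) ` {x0+1..L}"
  define \<beta>0 where "\<beta>0 = Min (insert 0 RS)"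
  define \<beta> where "\<beta> = Max (insert \<beta>0 LS)"
  define \<alpha> where "\<alpha> = m - \<beta> * real_of_int x0"
  have finLS: "finite LS" "finite RS" unfolding LS_def RS_def by auto
  have mi: "minor L D \<alpha> \<beta>"
    unfolding minor_def
  proof (intro allI impI)
    fix l' :: int assume l': "\<bar>l'\<bar> \<le> L"
    consider "l' < x0" | "l' = x0" | "l' > x0" by linarith
    thus "\<alpha> + \<beta> * real_of_int l' \<le> D l'"
    proof cases
      case 1
      hence "(m - D l') / real_of_int (x0 - l') \<in> LS" unfolding LS_def using l' by auto
      hence "(m - D l') / real_of_int (x0 - l') \<le> \<beta>" unfolding \<beta>_def using finLS by (intro Max_ge) auto
      hence "m - D l' \<le> \<beta> * real_of_int (x0 - l')" using 1 by (simp add: divide_le_eq)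
      thus ?thesis unfolding \<alpha>_def by (simp add: algebra_simps)
    next
      case 2
      have "m \<le> val (x0, x0)" using mle ne by simp
      thus ?thesis using 2 unfolding \<alpha>_def val_def by simp
    next
      case 3
      define sl where "sl = (D l' - m) / real_of_int (l' - x0)"
      have "\<beta> \<le> sl" unfolding \<beta>_def
      proof (subst Max_le_iff, simp_all add: finLS, intro conjI ballI)
        have "sl \<in> RS" unfolding RS_def sl_def using 3 l' by auto
        thus "\<beta>0 \<le> sl" unfolding \<beta>0_def using finLS by (intro Min_le) auto
      next
        fix b assume "b \<in> LS"
        then obtain i where i: "i \<in> {-L..x0-1}" "b = (m - D i) / real_of_int (x0 - i)" unfolding LS_def by auto
        have "(i, l') \<in> PR" using i 3 l' unfolding PR_def by auto
        hence "m \<le> val (i, l')" by (rule mle)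
        hence v: "m \<le> (D i * real_of_int (l' - x0) + D l' * real_of_int (x0 - i)) / (real_of_int (x0 - i) + real_of_int (l' - x0))"
          using i 3 unfolding val_def by (simp add: algebra_simps)
        have "(m - D i) / real_of_int (x0 - i) \<le> (D l' - m) / real_of_int (l' - x0)"
          by (rule slope_key[OF _ _ v]) (use i 3 in auto)
        thus "b \<le> sl" using i sl_def by simp
      qed
      hence "\<beta> * real_of_int (l' - x0) \<le> D l' - m" using 3 unfolding sl_def by (simp add: le_divide_eq)
      thus ?thesis unfolding \<alpha>_def by (simp add: algebra_simps)
    qed
  qed
  have "lower_hull_val (ptsS L D) (real_of_int x0) \<le> m" by (rule hv_le[OF inh])
  moreover have "\<alpha> + \<beta> * real_of_int x0 \<le> lower_hull_val (ptsS L D) (real_of_int x0)" by (rule hv_ge[OF mi x0])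
  ultimately have "lower_hull_val (ptsS L D) (real_of_int x0) = \<alpha> + \<beta> * real_of_int x0"
    unfolding \<alpha>_def by simp
  thus ?thesis using mi by blast
qed

lemma hull_slope_lb:
  assumes l1: "1 \<le> l" and lL: "l \<le> L"
  shows "\<exists>j. l \<le> j \<and> j \<le> L \<and> (D j - D (l - 1)) / real_of_int (j - l + 1)
           \<le> lower_hull_val (ptsS L D) (real_of_int l) - lower_hull_val (ptsS L D) (real_of_int (l - 1))"
proof -
  let ?h = "\<lambda>x. lower_hull_val (ptsS L D) (real_of_int x)"
  have a1: "\<bar>l - 1\<bar> \<le> L" using l1 lL by simp
  have a2: "\<bar>l\<bar> \<le> L" using l1 lL by simp
  obtain \<alpha> \<beta> where mi: "minor L D \<alpha> \<beta>" and hv: "?h (l - 1) = \<alpha> + \<beta> * real_of_int (l - 1)"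
    using supp[OF a1] by blast
  define RS where "RS = (\<lambda>j. (D j - D (l - 1)) / real_of_int (j - l + 1)) ` {l..L}"
  have finRS: "finite RS" "RS \<noteq> {}" unfolding RS_def using lL by auto
  define \<beta>' where "\<beta>' = Min RS"
  have "\<beta>' \<in> RS" unfolding \<beta>'_def using finRS by (rule Min_in)
  then obtain j where j: "j \<in> {l..L}" "\<beta>' = (D j - D (l - 1)) / real_of_int (j - l + 1)" unfolding RS_def by auto
  have \<beta>'le: "\<And>x. x \<in> {l..L} \<Longrightarrow> \<beta>' \<le> (D x - D (l - 1)) / real_of_int (x - l + 1)"
    unfolding \<beta>'_def RS_def using finRS(1) RS_def by (intro Min_le) auto
  define b where "b = max \<beta> \<beta>'"
  have mi2: "minor L D (?h (l - 1) - b * real_of_int (l - 1)) b"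
    unfolding minor_def
  proof (intro allI impI)
    fix x :: int assume x: "\<bar>x\<bar> \<le> L"
    show "?h (l - 1) - b * real_of_int (l - 1) + b * real_of_int x \<le> D x"
    proof (cases "x \<le> l - 1")
      case True
      have "b * real_of_int (x - (l - 1)) \<le> \<beta> * real_of_int (x - (l - 1))"
        using True unfolding b_def by (intro mult_right_mono_neg) auto
      moreover have "\<alpha> + \<beta> * real_of_int x \<le> D x" using mi x unfolding minor_def by simp
      ultimately show ?thesis using hv by (simp add: algebra_simps)
    next
      case False
      show ?thesis
      proof (cases "\<beta> \<le> \<beta>'")
        case True
        hence bb: "b = \<beta>'" unfolding b_def by simp
        have "\<beta>' \<le> (D x - D (l - 1)) / real_of_int (x - l + 1)" using \<beta>'le False x by simp
        hence "\<beta>' * real_of_int (x - l + 1) \<le> D x - D (l - 1)" using False by (simp add: le_divide_eq)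
        moreover have "?h (l - 1) \<le> D (l - 1)" by (rule hv_le_pt[OF a1])
        ultimately show ?thesis unfolding bb by (simp add: algebra_simps)
      next
        case False
        hence bb: "b = \<beta>" unfolding b_def by simp
        show ?thesis using mi x hv unfolding minor_def bb by (simp add: algebra_simps)
      qed
    qed
  qed
  have "?h (l - 1) - b * real_of_int (l - 1) + b * real_of_int l \<le> ?h l" by (rule hv_ge[OF mi2 a2])
  hence "b \<le> ?h l - ?h (l - 1)" by (simp add: algebra_simps)
  hence "\<beta>' \<le> ?h l - ?h (l - 1)" unfolding b_def by simp
  thus ?thesis using j by auto
qed

lemma hull_slope_ub:
  assumes l1: "- L + 1 \<le> l" and lL: "l \<le> L"
  shows "\<exists>i. - L \<le> i \<and> i \<le> l - 1 \<and>
           lower_hull_val (ptsS L D) (real_of_int l) - lower_hull_val (ptsS L D) (real_of_int (l - 1))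
           \<le> (D l - D i) / real_of_int (l - i)"
proof -
  let ?h = "\<lambda>x. lower_hull_val (ptsS L D) (real_of_int x)"
  have a1: "\<bar>l - 1\<bar> \<le> L" using l1 lL by simp
  have a2: "\<bar>l\<bar> \<le> L" using l1 lL by simp
  obtain \<alpha> \<beta> where mi: "minor L D \<alpha> \<beta>" and hv: "?h l = \<alpha> + \<beta> * real_of_int l"
    using supp[OF a2] by blast
  define LS where "LS = (\<lambda>i. (D l - D i) / real_of_int (l - i)) ` {-L..l-1}"
  have finLS: "finite LS" "LS \<noteq> {}" unfolding LS_def using l1 by auto
  define \<beta>' where "\<beta>' = Max LS"
  have "\<beta>' \<in> LS" unfolding \<beta>'_def using finLS by (rule Max_in)
  then obtain i where i: "i \<in> {-L..l-1}" "\<beta>' = (D l - D i) / real_of_int (l - i)" unfolding LS_def by auto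
  have \<beta>'ge: "\<And>x. x \<in> {-L..l-1} \<Longrightarrow> (D l - D x) / real_of_int (l - x) \<le> \<beta>'"
    unfolding \<beta>'_def LS_def using finLS(1) LS_def by (intro Max_ge) auto
  define b where "b = min \<beta> \<beta>'"
  have mi2: "minor L D (?h l - b * real_of_int l) b"
    unfolding minor_def
  proof (intro allI impI)
    fix x :: int assume x: "\<bar>x\<bar> \<le> L"
    show "?h l - b * real_of_int l + b * real_of_int x \<le> D x"
    proof (cases "l \<le> x")
      case True
      have "b * real_of_int (x - l) \<le> \<beta> * real_of_int (x - l)"
        using True unfolding b_def by (intro mult_right_mono) auto
      moreover have "\<alpha> + \<beta> * real_of_int x \<le> D x" using mi x unfolding minor_def by simp
      ultimately show ?thesis using hv by (simp add: algebra_simps)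
    next
      case False
      show ?thesis
      proof (cases "\<beta>' \<le> \<beta>")
        case True
        hence bb: "b = \<beta>'" unfolding b_def by simp
        have "(D l - D x) / real_of_int (l - x) \<le> \<beta>'" using \<beta>'ge False x by simp
        hence "D l - D x \<le> \<beta>' * real_of_int (l - x)" using False by (simp add: divide_le_eq)
        moreover have "?h l \<le> D l" by (rule hv_le_pt[OF a2])
        ultimately show ?thesis unfolding bb by (simp add: algebra_simps)
      next
        case False
        hence bb: "b = \<beta>" unfolding b_def by simp
        show ?thesis using mi x hv unfolding minor_def bb by (simp add: algebra_simps)
      qed
    qed
  qed
  have "?h l - b * real_of_int l + b * real_of_int (l - 1) \<le> ?h (l - 1)" by (rule hv_ge[OF mi2 a1])
  hence "?h l - ?h (l - 1) \<le> b" by (simp add: algebra_simps)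
  hence "?h l - ?h (l - 1) \<le> \<beta>'" unfolding b_def by simp
  thus ?thesis using i by auto
qed

locale prm =
  fixes p a s :: nat
  assumes pr: "prime p" and p7: "p \<ge> 7" and a1: "1 \<le> a" and a4: "a \<le> p - 4" and s2: "s \<le> p - 2"
begin

abbreviation "dl \<equiv> delta_eps p a s"
abbreviation "T1 \<equiv> t1 p a s"
abbreviation "T2 \<equiv> t2 p a s"
abbreviation "ke \<equiv> k_eps p a s"
abbreviation "dd \<equiv> T2 - T1"
abbreviation "pI \<equiv> int p"

lemma bnds: "int s \<le> pI - 2" "int a \<le> pI - 4" "1 \<le> int a" "7 \<le> pI"
  using s2 a4 a1 p7 by linarith+

definition rs :: int where "rs = resid p (int a + int s)"

lemma params:
  shows "0 \<le> rs" "rs < pI - 1" "dl * (pI - 1) \<le> rs + int s" "rs + int s < (dl + 1) * (pI - 1)"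
    "dl = 0 \<or> dl = 1" "ke = 2 + rs + int s - dl * (pI - 1)"
    "(int a + int s < pI - 1 \<and> rs = int a + int s \<and> T1 = int s + dl \<and> T2 = int a + int s + dl + 2) \<or>
     (int a + int s \<ge> pI - 1 \<and> rs = int a + int s - (pI - 1) \<and> T1 = rs + dl + 1 \<and> T2 = int a + int s + dl + 1)"
proof -
  have P1: "pI - 1 > 0" using p7 by simp
  show r0: "0 \<le> rs" "rs < pI - 1" unfolding rs_def resid_def using P1 by simp_all
  have dldef: "dl = (int s + rs) div (pI - 1)" unfolding delta_eps_def rs_def by simp
  have e: "(int s + rs) div (pI - 1) * (pI - 1) + (int s + rs) mod (pI - 1) = int s + rs" by (rule div_mult_mod_eq)
  have m: "0 \<le> (int s + rs) mod (pI - 1)" "(int s + rs) mod (pI - 1) < pI - 1" using P1 by simp_all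
  show d1: "dl * (pI - 1) \<le> rs + int s" "rs + int s < (dl + 1) * (pI - 1)"
    using e m dldef by (simp_all add: algebra_simps)
  have "dl \<ge> 0" using dldef r0 P1 by (simp add: pos_imp_zdiv_nonneg_iff)
  moreover have "dl < 2"
  proof -
    have "rs + int s < 2 * (pI - 1)" using r0(2) bnds(1) by (simp add: algebra_simps)
    hence "dl * (pI - 1) < 2 * (pI - 1)" using d1 by linarith
    thus ?thesis using P1 mult_right_less_imp_less[of dl "pI - 1" 2] by linarith
  qed
  ultimately show "dl = 0 \<or> dl = 1" by linarith
  have "ke = 2 + (int a + 2 * int s) mod (pI - 1)" unfolding k_eps_def resid_def by simp
  also have "(int a + 2 * int s) mod (pI - 1) = (rs + int s) mod (pI - 1)"
  proof -
    have "int a + 2 * int s = (int a + int s) + int s" by simp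
    hence "(int a + 2 * int s) mod (pI - 1) = ((int a + int s) mod (pI - 1) + int s) mod (pI - 1)"
      by (metis mod_add_left_eq)
    thus ?thesis unfolding rs_def resid_def by simp
  qed
  also have "(rs + int s) mod (pI - 1) = rs + int s - dl * (pI - 1)"
    using e dldef by (simp add: algebra_simps)
  finally show "ke = 2 + rs + int s - dl * (pI - 1)" by simp
  show "(int a + int s < pI - 1 \<and> rs = int a + int s \<and> T1 = int s + dl \<and> T2 = int a + int s + dl + 2) \<or>
     (int a + int s \<ge> pI - 1 \<and> rs = int a + int s - (pI - 1) \<and> T1 = rs + dl + 1 \<and> T2 = int a + int s + dl + 1)"
  proof (cases "a + s < p - 1")
    case True
    hence lt: "int a + int s < pI - 1" by linarith
    hence "rs = int a + int s" unfolding rs_def resid_def by simp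
    thus ?thesis using True lt unfolding t1_def t2_def rs_def by simp
  next
    case False
    hence ge: "int a + int s \<ge> pI - 1" using p7 by linarith
    have lt2: "int a + int s - (pI - 1) < pI - 1" using bnds by linarith
    have "(int a + int s) mod (pI - 1) = ((int a + int s - (pI - 1)) + (pI - 1)) mod (pI - 1)" by simp
    also have "\<dots> = (int a + int s - (pI - 1)) mod (pI - 1)" by (rule mod_add_self2)
    also have "\<dots> = int a + int s - (pI - 1)" using ge lt2 by (intro mod_pos_pos_trivial) linarith+
    finally have "rs = int a + int s - (pI - 1)" unfolding rs_def resid_def .
    thus ?thesis using False ge unfolding t1_def t2_def rs_def by simp
  qed
qed

lemma pf: "0 \<le> T1" "T1 \<le> pI - 2" "3 \<le> dd" "dd \<le> pI - 1" "0 \<le> dl" "dl \<le> 1"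
  using params bnds by auto

definition duI :: "int \<Rightarrow> int" where
  "duI x = (let q = (x - T1) div (pI + 1) in 2 * q + 1 + (if x - (pI + 1) * q \<ge> T2 then 1 else 0))"

lemma d_ur_eq: "d_ur p a s kb = duI (int kb)"
  by (simp add: d_ur_def duI_def Let_def)

lemma du_eval: assumes "0 \<le> \<rho>" "\<rho> \<le> pI"
  shows "duI (T1 + (pI + 1) * q + \<rho>) = 2 * q + 1 + (if \<rho> \<ge> dd then 1 else 0)"
proof -
  have "(T1 + (pI + 1) * q + \<rho> - T1) div (pI + 1) = (\<rho> + (pI + 1) * q) div (pI + 1)" by (simp add: algebra_simps)
  also have "\<dots> = \<rho> div (pI + 1) + q" using bnds by simp
  also have "\<rho> div (pI + 1) = 0" using assms by simp
  finally have q: "(T1 + (pI + 1) * q + \<rho> - T1) div (pI + 1) = q" by simp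
  show ?thesis unfolding duI_def Let_def q by auto
qed

definition gI :: "int \<Rightarrow> int" where "gI x = 2 * x - duI x"

lemma g_eval: assumes "0 \<le> \<rho>" "\<rho> \<le> pI"
  shows "gI (T1 + (pI + 1) * q + \<rho>) = 2 * T1 + 2 * pI * q - 1 + 2 * \<rho> - (if \<rho> \<ge> dd then 1 else 0)"
  unfolding gI_def du_eval[OF assms] by (simp add: algebra_simps)

lemma du_alt: "duI x = (x - T1) div (pI + 1) + (x - T1 + pI + 1 - dd) div (pI + 1) + 1"
proof -
  define q where "q = (x - T1) div (pI + 1)"
  define \<rho> where "\<rho> = (x - T1) mod (pI + 1)"
  have P: "pI + 1 > 0" using bnds by simp
  have r: "0 \<le> \<rho>" "\<rho> \<le> pI" using P unfolding \<rho>_def by (simp_all add: pos_mod_sign) (use pos_mod_bound[OF P, of "x - T1"] in linarith)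
  have "(pI + 1) * q + \<rho> = x - T1" unfolding q_def \<rho>_def by (metis mult.commute div_mult_mod_eq)
  hence x: "x = T1 + (pI + 1) * q + \<rho>" by linarith
  have "(x - T1 + pI + 1 - dd) div (pI + 1) = ((\<rho> + pI + 1 - dd) + (pI + 1) * q) div (pI + 1)"
    unfolding x by (simp add: algebra_simps)
  also have "\<dots> = (\<rho> + pI + 1 - dd) div (pI + 1) + q" using P by simp
  also have "(\<rho> + pI + 1 - dd) div (pI + 1) = (if \<rho> \<ge> dd then 1 else 0)"
  proof (cases "\<rho> \<ge> dd")
    case True
    have "(\<rho> + pI + 1 - dd) div (pI + 1) = ((\<rho> - dd) + 1 * (pI + 1)) div (pI + 1)" by (simp add: algebra_simps)
    also have "\<dots> = (\<rho> - dd) div (pI + 1) + 1" using P by (simp only: div_mult_self1)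
    also have "(\<rho> - dd) div (pI + 1) = 0" using True r pf by (intro div_pos_pos_trivial) linarith+
    finally show ?thesis using True by simp
  next
    case False
    have "(\<rho> + pI + 1 - dd) div (pI + 1) = 0" using False r pf by (intro div_pos_pos_trivial) linarith+
    thus ?thesis using False by simp
  qed
  finally have e: "(x - T1 + pI + 1 - dd) div (pI + 1) = (if \<rho> \<ge> dd then 1 else 0) + q" .
  have "duI x = 2 * q + 1 + (if \<rho> \<ge> dd then 1 else 0)" using du_eval[OF r, of q] x by simp
  thus ?thesis using e q_def by simp
qed

lemma du_mono: "x \<le> y \<Longrightarrow> duI x \<le> duI y"
proof -
  assume xy: "x \<le> y"
  have P: "pI + 1 > 0" using bnds by simp
  have "(x - T1) div (pI + 1) \<le> (y - T1) div (pI + 1)" using xy P by (intro zdiv_mono1) auto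
  moreover have "(x - T1 + pI + 1 - dd) div (pI + 1) \<le> (y - T1 + pI + 1 - dd) div (pI + 1)"
    using xy P by (intro zdiv_mono1) auto
  ultimately show ?thesis unfolding du_alt[of x] du_alt[of y] by simp
qed

lemma div_add_le_self: assumes "0 \<le> t" "1 \<le> (m::int)" shows "(z + t) div m \<le> z div m + t"
proof -
  have "(z + t) div m \<le> (z + t * m) div m" using assms by (intro zdiv_mono1) (auto simp: mult_le_cancel_left1)
  also have "\<dots> = z div m + t" using assms by simp
  finally show ?thesis .
qed

lemma g_mono: "x \<le> y \<Longrightarrow> gI x \<le> gI y"
proof -
  assume xy: "x \<le> y"
  have P: "pI + 1 \<ge> 1" using bnds by simp
  have "(y - T1) div (pI + 1) \<le> (x - T1) div (pI + 1) + (y - x)"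
    using div_add_le_self[of "y - x" "pI + 1" "x - T1"] xy P by simp
  moreover have "(y - T1 + pI + 1 - dd) div (pI + 1) \<le> (x - T1 + pI + 1 - dd) div (pI + 1) + (y - x)"
    using div_add_le_self[of "y - x" "pI + 1" "x - T1 + pI + 1 - dd"] xy P by (simp add: algebra_simps)
  ultimately show ?thesis unfolding gI_def du_alt[of x] du_alt[of y] by simp
qed

lemma du_lower: "duI x \<ge> 2 * ((x - T1) div (pI + 1)) + 1"
  unfolding duI_def Let_def by simp

lemma cs: "(T1 = int s + dl \<and> dd = int a + 2 \<and> ke = 2 + int a + 2 * int s - dl * (pI - 1)) \<or>
           (T1 = int a + int s - pI + 2 + dl \<and> dd = pI - 1 \<and> ke = 2 + int a + 2 * int s - (dl + 1) * (pI - 1))"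
  using params by (auto simp: algebra_simps)

definition Pn :: "int \<Rightarrow> int" where
  "Pn n = (if even n then T1 + (pI + 1) * (n div 2 - 1) + dd - 1 else T1 + (pI + 1) * (n div 2 - 1) + pI)"

definition Qn :: "int \<Rightarrow> int" where
  "Qn n = (let u = n - 1 + 2 * dl - 2 * T1; q0 = u div (2 * pI); r0 = u mod (2 * pI) in
     T1 + (pI + 1) * q0 + (if odd r0 then (r0 + 1) div 2 else if r0 \<le> 2 * dd - 2 then r0 div 2 else r0 div 2 + 1))"

lemma P_cases:
  obtains (ev) m where "n = 2 * m" "Pn n = T1 + (pI + 1) * (m - 1) + dd - 1"
        | (od) m where "n = 2 * m + 1" "Pn n = T1 + (pI + 1) * (m - 1) + pI"
proof (cases "even n")
  case True
  then obtain m where "n = 2 * m" by (rule evenE)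
  thus ?thesis using ev True unfolding Pn_def by simp
next
  case False
  then obtain m where "n = 2 * m + 1" by (rule oddE)
  thus ?thesis using od False unfolding Pn_def by simp
qed

lemma Q_cases:
  obtains (ev) q0 k where "n - 1 + 2 * dl - 2 * T1 = 2 * pI * q0 + 2 * k + 1" "0 \<le> k" "k \<le> pI - 1"
                         "Qn n = T1 + (pI + 1) * q0 + k + 1" "even n"
        | (od1) q0 k where "n - 1 + 2 * dl - 2 * T1 = 2 * pI * q0 + 2 * k" "0 \<le> k" "k \<le> dd - 1"
                         "Qn n = T1 + (pI + 1) * q0 + k" "odd n"
        | (od2) q0 k where "n - 1 + 2 * dl - 2 * T1 = 2 * pI * q0 + 2 * k" "dd \<le> k" "k \<le> pI - 1"
                         "Qn n = T1 + (pI + 1) * q0 + k + 1" "odd n"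
proof -
  define u where "u = n - 1 + 2 * dl - 2 * T1"
  define q0 where "q0 = u div (2 * pI)"
  define r0 where "r0 = u mod (2 * pI)"
  have P: "2 * pI > 0" using bnds by simp
  have ur: "u = 2 * pI * q0 + r0" unfolding q0_def r0_def by (metis div_mult_mod_eq mult.commute)
  have r: "0 \<le> r0" "r0 < 2 * pI" unfolding r0_def using P by simp_all
  have Q: "Qn n = T1 + (pI + 1) * q0 + (if odd r0 then (r0 + 1) div 2 else if r0 \<le> 2 * dd - 2 then r0 div 2 else r0 div 2 + 1)"
    unfolding Qn_def Let_def u_def q0_def r0_def by simp
  show ?thesis
  proof (cases "odd r0")
    case True
    then obtain k where k: "r0 = 2 * k + 1" by (rule oddE)
    have "even n"
    proof -
      have "n = 2 * (pI * q0 + k + 1 - dl + T1)" using ur k u_def by (simp add: algebra_simps)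
      thus ?thesis by simp
    qed
    moreover have "(r0 + 1) div 2 = k + 1" using k by simp
    ultimately show ?thesis using ev[of q0 k] ur k r Q True u_def by auto
  next
    case False
    hence "even r0" by simp
    then obtain k where k: "r0 = 2 * k" by (rule evenE)
    have on: "odd n"
    proof -
      have "n = 2 * (pI * q0 + k - dl + T1) + 1" using ur k u_def by (simp add: algebra_simps)
      thus ?thesis by simp
    qed
    show ?thesis
    proof (cases "r0 \<le> 2 * dd - 2")
      case True
      thus ?thesis using od1[of q0 k] ur k r Q False u_def on by auto
    next
      case F2: False
      thus ?thesis using od2[of q0 k] ur k r Q False u_def on by auto
    qed
  qed
qed

lemma P_du: "duI (Pn n) \<le> n - 1" "duI (Pn n + 1) \<ge> n"
proof -
  have "duI (Pn n) = n - 1 \<and> duI (Pn n + 1) = n"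
  proof (cases n rule: P_cases)
    case (ev m)
    have "Pn n = T1 + (pI + 1) * (m - 1) + (dd - 1)" using ev(2) by simp
    hence "duI (Pn n) = 2 * (m - 1) + 1 + (if dd - 1 \<ge> dd then 1 else 0)"
      using du_eval[of "dd - 1" "m - 1"] pf by simp
    moreover have "duI (Pn n + 1) = 2 * (m - 1) + 1 + (if dd \<ge> dd then 1 else 0)"
    proof -
      have "Pn n + 1 = T1 + (pI + 1) * (m - 1) + dd" unfolding ev(2) by simp
      thus ?thesis using du_eval[of "dd" "m - 1"] pf by simp
    qed
    ultimately show ?thesis using ev(1) by simp
  next
    case (od m)
    have "duI (Pn n) = 2 * (m - 1) + 1 + (if pI \<ge> dd then 1 else 0)"
      unfolding od(2) using du_eval[of "pI" "m - 1"] pf bnds by simp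
    moreover have "duI (Pn n + 1) = 2 * m + 1 + (if 0 \<ge> dd then 1 else 0)"
    proof -
      have "Pn n + 1 = T1 + (pI + 1) * m + 0" unfolding od(2) by (simp add: algebra_simps)
      thus ?thesis using du_eval[of 0 m] pf bnds by simp
    qed
    ultimately show ?thesis using od(1) pf by simp
  qed
  thus "duI (Pn n) \<le> n - 1" "duI (Pn n + 1) \<ge> n" by simp_all
qed

lemma Q_g: "gI (Qn n) \<ge> n - 2 + 2 * dl" "gI (Qn n - 1) < n - 2 + 2 * dl"
proof -
  have "gI (Qn n) \<ge> n - 2 + 2 * dl \<and> gI (Qn n - 1) < n - 2 + 2 * dl"
  proof (cases n rule: Q_cases)
    case (ev q0 k)
    have g1: "gI (Qn n) = 2 * T1 + 2 * pI * q0 - 1 + 2 * (k + 1) - (if k + 1 \<ge> dd then 1 else 0)"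
      using g_eval[of "k + 1" q0] ev by (simp add: add.assoc)
    have g2: "gI (Qn n - 1) = 2 * T1 + 2 * pI * q0 - 1 + 2 * k - (if k \<ge> dd then 1 else 0)"
      using g_eval[of "k" q0] ev by simp
    show ?thesis using g1 g2 ev(1) by auto
  next
    case (od1 q0 k)
    have g1: "gI (Qn n) = 2 * T1 + 2 * pI * q0 - 1 + 2 * k - (if k \<ge> dd then 1 else 0)"
      using g_eval[of "k" q0] od1 pf by simp
    have g2: "gI (Qn n - 1) < n - 2 + 2 * dl"
    proof (cases "k = 0")
      case True
      have "Qn n - 1 = T1 + (pI + 1) * (q0 - 1) + pI" using od1 True by (simp add: algebra_simps)
      hence "gI (Qn n - 1) = 2 * T1 + 2 * pI * (q0 - 1) - 1 + 2 * pI - (if pI \<ge> dd then 1 else 0)"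
        using g_eval[of pI "q0 - 1"] bnds by simp
      thus ?thesis using od1(1) True pf by (simp add: algebra_simps)
    next
      case False
      have qq: "Qn n - 1 = T1 + (pI + 1) * q0 + (k - 1)" using od1 by simp
      have "gI (T1 + (pI + 1) * q0 + (k - 1)) = 2 * T1 + 2 * pI * q0 - 1 + 2 * (k - 1) - (if k - 1 \<ge> dd then 1 else 0)"
        using od1 False pf by (intro g_eval) auto
      hence "gI (Qn n - 1) = 2 * T1 + 2 * pI * q0 - 1 + 2 * (k - 1) - (if k - 1 \<ge> dd then 1 else 0)"
        unfolding qq .
      thus ?thesis using od1(1) by auto
    qed
    show ?thesis using g1 g2 od1 by auto
  next
    case (od2 q0 k)
    have g1: "gI (Qn n) = 2 * T1 + 2 * pI * q0 - 1 + 2 * (k + 1) - (if k + 1 \<ge> dd then 1 else 0)"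
      using g_eval[of "k + 1" q0] od2 pf by (simp add: add.assoc)
    have g2: "gI (Qn n - 1) = 2 * T1 + 2 * pI * q0 - 1 + 2 * k - (if k \<ge> dd then 1 else 0)"
      using g_eval[of "k" q0] od2 pf by simp
    show ?thesis using g1 g2 od2 by auto
  qed
  thus "gI (Qn n) \<ge> n - 2 + 2 * dl" "gI (Qn n - 1) < n - 2 + 2 * dl" by simp_all
qed

lemma A1: "2 * Pn n \<ge> (pI + 1) * (n - 1 + dl) + ke - pI"
      "2 * Pn n \<le> (pI + 1) * (n - 1 + dl) + ke - 2 + pI"
proof -
  have "2 * Pn n - (pI + 1) * (n - 1 + dl) = 2 * T1 + 2 * dd - 3 - pI - (pI + 1) * dl \<or>
        2 * Pn n - (pI + 1) * (n - 1 + dl) = 2 * T1 - 2 - (pI + 1) * dl"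
  proof (cases n rule: P_cases)
    case (ev m)
    have "2 * Pn n - (pI + 1) * (n - 1 + dl) = 2 * (T1 + (pI + 1) * (m - 1) + dd - 1) - (pI + 1) * (n - 1 + dl)"
      using ev(2) by simp
    also have "\<dots> = 2 * T1 + 2 * dd - 3 - pI - (pI + 1) * dl" using ev(1) by (simp add: algebra_simps)
    finally show ?thesis by simp
  next
    case (od m)
    have "2 * Pn n - (pI + 1) * (n - 1 + dl) = 2 * (T1 + (pI + 1) * (m - 1) + pI) - (pI + 1) * (n - 1 + dl)"
      using od(2) by simp
    also have "\<dots> = 2 * T1 - 2 - (pI + 1) * dl" using od(1) by (simp add: algebra_simps)
    finally show ?thesis by simp
  qed
  moreover note cs bnds pf
  ultimately show "2 * Pn n \<ge> (pI + 1) * (n - 1 + dl) + ke - pI"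
      "2 * Pn n \<le> (pI + 1) * (n - 1 + dl) + ke - 2 + pI"
    by (auto simp: algebra_simps)
qed

lemma A2: "Pn n + pI * Qn n \<ge> (pI + 1) * (n - 1 + dl) + 1 - pI"
      "Pn n + pI * Qn n \<le> (pI + 1) * (n - 1 + dl) + pI"
proof -
  have "\<exists>k. 0 \<le> k \<and> k \<le> pI - 1 \<and> (Pn n + pI * Qn n - (pI + 1) * (n - 1 + dl) = dd - 2 - k \<or>
          (k \<le> dd - 1 \<and> Pn n + pI * Qn n - (pI + 1) * (n - 1 + dl) = - 1 - k) \<or>
          (dd \<le> k \<and> Pn n + pI * Qn n - (pI + 1) * (n - 1 + dl) = pI - 1 - k))"
  proof (cases n rule: Q_cases)
    case (ev q0 k)
    obtain m where m: "n = 2 * m" "Pn n = T1 + (pI + 1) * (m - 1) + dd - 1"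
      using ev(5) by (cases n rule: P_cases) auto
    have mm: "m = pI * q0 + k + 1 - dl + T1" using ev(1) m(1) by (simp add: algebra_simps)
    have "Pn n + pI * Qn n - (pI + 1) * (n - 1 + dl) = (T1 + (pI + 1) * (m - 1) + dd - 1) + pI * (T1 + (pI + 1) * q0 + k + 1) - (pI + 1) * (n - 1 + dl)"
      using m(2) ev(4) by simp
    also have "\<dots> = dd - 2 - k" unfolding m(1) mm by (simp add: algebra_simps)
    finally have "Pn n + pI * Qn n - (pI + 1) * (n - 1 + dl) = dd - 2 - k" .
    thus ?thesis using ev by (intro exI[of _ k]) auto
  next
    case (od1 q0 k)
    obtain m where m: "n = 2 * m + 1" "Pn n = T1 + (pI + 1) * (m - 1) + pI"
      using od1(5) by (cases n rule: P_cases) auto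
    have mm: "m = pI * q0 + k - dl + T1" using od1(1) m(1) by (simp add: algebra_simps)
    have "Pn n + pI * Qn n - (pI + 1) * (n - 1 + dl) = (T1 + (pI + 1) * (m - 1) + pI) + pI * (T1 + (pI + 1) * q0 + k) - (pI + 1) * (n - 1 + dl)"
      using m(2) od1(4) by simp
    also have "\<dots> = - 1 - k" unfolding m(1) mm by (simp add: algebra_simps)
    finally have "Pn n + pI * Qn n - (pI + 1) * (n - 1 + dl) = - 1 - k" .
    thus ?thesis using od1 pf by (intro exI[of _ k]) auto
  next
    case (od2 q0 k)
    obtain m where m: "n = 2 * m + 1" "Pn n = T1 + (pI + 1) * (m - 1) + pI"
      using od2(5) by (cases n rule: P_cases) auto
    have mm: "m = pI * q0 + k - dl + T1" using od2(1) m(1) by (simp add: algebra_simps)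
    have "Pn n + pI * Qn n - (pI + 1) * (n - 1 + dl) = (T1 + (pI + 1) * (m - 1) + pI) + pI * (T1 + (pI + 1) * q0 + k + 1) - (pI + 1) * (n - 1 + dl)"
      using m(2) od2(4) by simp
    also have "\<dots> = pI - 1 - k" unfolding m(1) mm by (simp add: algebra_simps)
    finally have "Pn n + pI * Qn n - (pI + 1) * (n - 1 + dl) = pI - 1 - k" .
    thus ?thesis using od2 pf by (intro exI[of _ k]) auto
  qed
  thus "Pn n + pI * Qn n \<ge> (pI + 1) * (n - 1 + dl) + 1 - pI"
      "Pn n + pI * Qn n \<le> (pI + 1) * (n - 1 + dl) + pI"
    using pf by auto
qed

end

definition wJ :: "int \<Rightarrow> int \<Rightarrow> int \<Rightarrow> int" where
  "wJ q K x = 1 + int (multiplicity q (K - x))"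

context prm begin

definition hh :: "int \<Rightarrow> int" where "hh x = x + 1 - dl"

definition mI :: "int \<Rightarrow> int \<Rightarrow> int" where
  "mI n x = (if duI x < n \<and> n < 2 * hh x - duI x then min (n - duI x) (2 * hh x - duI x - n) else 0)"

lemma m_n_eq: "m_n p a s n kb = mI n (int kb)"
  unfolding m_n_def mI_def d_ur_eq d_Iw_def hh_def by (simp add: algebra_simps)

lemma mI_diff: "mI n x - mI (n - 1) x =
   (if n \<le> hh x \<and> duI x \<le> n - 1 then 1 else 0) - (if hh x < n \<and> duI x \<le> 2 * hh x - n then 1 else 0)"
  unfolding mI_def by (auto simp: min_def)

lemma pI_prime: "prime pI" using pr by (simp add: prime_nat_int_transfer)

lemma weight_eq: assumes "kb' \<noteq> kb"
  shows "1 + int (multiplicity (int p) (wt p a s kb - wt p a s kb')) = wJ pI (int kb) (int kb')"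
proof -
  have "wt p a s kb - wt p a s kb' = (pI - 1) * (int kb - int kb')" unfolding wt_def by (simp add: algebra_simps)
  moreover have "\<not> pI dvd (pI - 1)"
  proof
    assume "pI dvd (pI - 1)"
    hence "pI \<le> pI - 1" using bnds by (intro zdvd_imp_le) auto
    thus False by simp
  qed
  moreover have "prime_elem pI" using pI_prime by simp
  ultimately show ?thesis unfolding wJ_def by (simp add: multiplicity_prime_elem_times_other)
qed

lemma mI_zero: assumes "int kb' \<ge> T1 + (pI + 1) * (\<bar>n\<bar> + 1)"
  shows "mI n (int kb') = 0" "mI (n - 1) (int kb') = 0"
proof -
  have "(\<bar>n\<bar> + 1) * (pI + 1) \<le> int kb' - T1" using assms by (simp add: algebra_simps)
  hence "\<bar>n\<bar> + 1 \<le> (int kb' - T1) div (pI + 1)" using le_div_iff_int[of "pI + 1"] bnds by simp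
  hence "duI (int kb') \<ge> 2 * (\<bar>n\<bar> + 1) + 1" using du_lower[of "int kb'"] by (smt (verit))
  thus "mI n (int kb') = 0" "mI (n - 1) (int kb') = 0" unfolding mI_def by auto
qed

lemma vp_sum:
  assumes B: "\<And>kb'. kb' \<ge> B \<Longrightarrow> mI n (int kb') = 0"
  shows "vp_g_hat p a s n kb = (\<Sum>kb'\<in>{..<B} - {kb}. mI n (int kb') * wJ pI (int kb) (int kb'))"
  unfolding vp_g_hat_def
proof (rule sum.mono_neutral_cong_left)
  show "finite ({..<B} - {kb})" by simp
  show "{kb'. kb' \<noteq> kb \<and> m_n p a s n kb' \<noteq> 0} \<subseteq> {..<B} - {kb}"
    using B m_n_eq by (auto simp: not_less[symmetric])
  show "\<forall>i\<in>{..<B} - {kb} - {kb'. kb' \<noteq> kb \<and> m_n p a s n kb' \<noteq> 0}. mI n (int i) * wJ pI (int kb) (int i) = 0"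
    using m_n_eq by auto
  fix x assume "x \<in> {kb'. kb' \<noteq> kb \<and> m_n p a s n kb' \<noteq> 0}"
  thus "m_n p a s n x * (1 + int (multiplicity (int p) (wt p a s kb - wt p a s x))) = mI n (int x) * wJ pI (int kb) (int x)"
    using weight_eq m_n_eq by simp
qed

lemma plus_iff: "(n \<le> hh x \<and> duI x \<le> n - 1) \<longleftrightarrow> (n - 1 + dl \<le> x \<and> x \<le> Pn n)"
proof -
  have "duI x \<le> n - 1 \<longleftrightarrow> x \<le> Pn n"
  proof
    assume "duI x \<le> n - 1"
    show "x \<le> Pn n"
    proof (rule ccontr)
      assume "\<not> x \<le> Pn n"
      hence "duI (Pn n + 1) \<le> duI x" by (intro du_mono) simp
      thus False using P_du(2)[of n] \<open>duI x \<le> n - 1\<close> by simp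
    qed
  next
    assume "x \<le> Pn n"
    thus "duI x \<le> n - 1" using du_mono P_du(1)[of n] by (meson order_trans)
  qed
  thus ?thesis unfolding hh_def by auto
qed

lemma minus_iff: "(hh x < n \<and> duI x \<le> 2 * hh x - n) \<longleftrightarrow> (Qn n \<le> x \<and> x \<le> n - 2 + dl)"
proof -
  have "duI x \<le> 2 * hh x - n \<longleftrightarrow> gI x \<ge> n - 2 + 2 * dl" unfolding gI_def hh_def by auto
  also have "\<dots> \<longleftrightarrow> Qn n \<le> x"
  proof
    assume "gI x \<ge> n - 2 + 2 * dl"
    show "Qn n \<le> x"
    proof (rule ccontr)
      assume "\<not> Qn n \<le> x"
      hence "gI x \<le> gI (Qn n - 1)" by (intro g_mono) simp
      thus False using Q_g(2)[of n] \<open>gI x \<ge> n - 2 + 2 * dl\<close> by simp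
    qed
  next
    assume "Qn n \<le> x"
    thus "gI x \<ge> n - 2 + 2 * dl" using g_mono Q_g(1)[of n] by (meson order_trans)
  qed
  finally show ?thesis unfolding hh_def by auto
qed

lemma int_image_set:
  assumes "\<And>x. P x \<Longrightarrow> 0 \<le> x \<and> x < int B"
  shows "int ` {kb'\<in>{..<B} - {kb}. P (int kb')} = {x. x \<noteq> int kb \<and> P x}"
proof (intro set_eqI iffI)
  fix x assume "x \<in> int ` {kb'\<in>{..<B} - {kb}. P (int kb')}"
  thus "x \<in> {x. x \<noteq> int kb \<and> P x}" by auto
next
  fix x assume x: "x \<in> {x. x \<noteq> int kb \<and> P x}"
  hence x0: "0 \<le> x" "x < int B" using assms by auto
  hence "nat x \<in> {kb'\<in>{..<B} - {kb}. P (int kb')}" using x by auto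
  moreover have "x = int (nat x)" using x0 by simp
  ultimately show "x \<in> int ` {kb'\<in>{..<B} - {kb}. P (int kb')}" by blast
qed

lemma inc_eq:
  "vp_g_hat p a s n kb - vp_g_hat p a s (n - 1) kb =
    (\<Sum>x\<in>{x. x \<noteq> int kb \<and> (0 \<le> x \<and> n - 1 + dl \<le> x \<and> x \<le> Pn n)}. wJ pI (int kb) x) -
    (\<Sum>x\<in>{x. x \<noteq> int kb \<and> (0 \<le> x \<and> Qn n \<le> x \<and> x \<le> n - 2 + dl)}. wJ pI (int kb) x)"
proof -
  define B where "B = nat (T1 + (pI + 1) * (\<bar>n\<bar> + 1)) + nat (Pn n) + nat \<bar>n\<bar> + 1"
  define w where "w = (\<lambda>kb'. wJ pI (int kb) (int kb'))"
  define U where "U = {..<B} - {kb}"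
  define PL where "PL = (\<lambda>x. 0 \<le> x \<and> n - 1 + dl \<le> x \<and> x \<le> Pn n)"
  define MI where "MI = (\<lambda>x. 0 \<le> x \<and> Qn n \<le> x \<and> x \<le> n - 2 + dl)"
  have Bz: "\<And>kb'. kb' \<ge> B \<Longrightarrow> mI n (int kb') = 0 \<and> mI (n - 1) (int kb') = 0"
  proof -
    fix kb' assume "kb' \<ge> B"
    hence "int kb' \<ge> T1 + (pI + 1) * (\<bar>n\<bar> + 1)" unfolding B_def by linarith
    thus "mI n (int kb') = 0 \<and> mI (n - 1) (int kb') = 0" using mI_zero by blast
  qed
  have v1: "vp_g_hat p a s n kb = (\<Sum>kb'\<in>U. mI n (int kb') * w kb')"
    unfolding U_def w_def using Bz by (intro vp_sum) blast
  have v2: "vp_g_hat p a s (n - 1) kb = (\<Sum>kb'\<in>U. mI (n - 1) (int kb') * w kb')"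
    unfolding U_def w_def using Bz by (intro vp_sum) blast
  have "vp_g_hat p a s n kb - vp_g_hat p a s (n - 1) kb = (\<Sum>kb'\<in>U. (mI n (int kb') - mI (n - 1) (int kb')) * w kb')"
    unfolding v1 v2 by (simp add: sum_subtractf left_diff_distrib)
  also have "\<dots> = (\<Sum>kb'\<in>U. (if PL (int kb') then w kb' else 0) - (if MI (int kb') then w kb' else 0))"
  proof (intro sum.cong refl)
    fix kb' assume "kb' \<in> U"
    have "mI n (int kb') - mI (n - 1) (int kb') = (if PL (int kb') then 1 else 0) - (if MI (int kb') then 1 else 0)"
      unfolding mI_diff PL_def MI_def plus_iff minus_iff by simp
    thus "(mI n (int kb') - mI (n - 1) (int kb')) * w kb' = (if PL (int kb') then w kb' else 0) - (if MI (int kb') then w kb' else 0)"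
      by simp
  qed
  also have "\<dots> = (\<Sum>kb'\<in>{kb'\<in>U. PL (int kb')}. w kb') - (\<Sum>kb'\<in>{kb'\<in>U. MI (int kb')}. w kb')"
  proof -
    have fU: "finite U" unfolding U_def by simp
    show ?thesis unfolding sum_subtractf sum.inter_filter[OF fU] by (rule refl)
  qed
  also have "(\<Sum>kb'\<in>{kb'\<in>U. PL (int kb')}. w kb') = (\<Sum>x\<in>int ` {kb'\<in>U. PL (int kb')}. wJ pI (int kb) x)"
    unfolding w_def by (subst sum.reindex) (auto simp: inj_on_def)
  also have "int ` {kb'\<in>U. PL (int kb')} = {x. x \<noteq> int kb \<and> PL x}"
    unfolding U_def
  proof (rule int_image_set)
    fix x assume "PL x"
    thus "0 \<le> x \<and> x < int B" unfolding PL_def B_def by auto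
  qed
  also have "(\<Sum>kb'\<in>{kb'\<in>U. MI (int kb')}. w kb') = (\<Sum>x\<in>int ` {kb'\<in>U. MI (int kb')}. wJ pI (int kb) x)"
    unfolding w_def by (subst sum.reindex) (auto simp: inj_on_def)
  also have "int ` {kb'\<in>U. MI (int kb')} = {x. x \<noteq> int kb \<and> MI x}"
    unfolding U_def
  proof (rule int_image_set)
    fix x assume "MI x"
    have "int B = int (nat (T1 + (pI + 1) * (\<bar>n\<bar> + 1))) + int (nat (Pn n)) + \<bar>n\<bar> + 1"
      unfolding B_def by simp
    moreover have "int (nat (T1 + (pI + 1) * (\<bar>n\<bar> + 1))) \<ge> 0" "int (nat (Pn n)) \<ge> 0" by simp_all
    ultimately have "\<bar>n\<bar> < int B" by linarith
    thus "0 \<le> x \<and> x < int B" using \<open>MI x\<close> unfolding MI_def using pf by auto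
  qed
  finally show ?thesis unfolding PL_def MI_def .
qed

end

lemma wJ_pos: "wJ q K x \<ge> 1" unfolding wJ_def by simp

lemma sum_right: "(\<Sum>x\<in>{K+1..K+m}. wJ q K x) = Wf q m"
proof -
  have se: "{K+1..K+m} = (\<lambda>j. K + j) ` {1..m}" by (auto simp: image_iff intro!: bexI[of _ "_ - K"])
  have inj: "inj_on (\<lambda>j. K + j) {1..m}" by (simp add: inj_on_def)
  have "(\<Sum>x\<in>{K+1..K+m}. wJ q K x) = (\<Sum>j\<in>{1..m}. wJ q K (K + j))"
    unfolding se sum.reindex[OF inj] by (simp add: comp_def)
  also have "\<dots> = Wf q m" unfolding Wf_def wJ_def by (simp add: multiplicity_uminus_right)
  finally show ?thesis .
qed

lemma sum_left: "(\<Sum>x\<in>{K-m..K-1}. wJ q K x) = Wf q m"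
proof -
  have se: "{K-m..K-1} = (\<lambda>j. K - j) ` {1..m}" by (auto simp: image_iff intro!: bexI[of _ "K - _"])
  have inj: "inj_on (\<lambda>j. K - j) {1..m}" by (simp add: inj_on_def)
  have "(\<Sum>x\<in>{K-m..K-1}. wJ q K x) = (\<Sum>j\<in>{1..m}. wJ q K (K - j))"
    unfolding se sum.reindex[OF inj] by (simp add: comp_def)
  also have "\<dots> = Wf q m" unfolding Wf_def wJ_def by simp
  finally show ?thesis .
qed

lemma sum_mid: assumes "K + r - 1 \<le> P" "1 \<le> r"
  shows "(\<Sum>x\<in>{K+r..P}. wJ q K x) = Wf q (P - K) - Wf q (r - 1)"
proof -
  have "{K+1..K+(P-K)} = {K+1..K+(r-1)} \<union> {K+r..P}" using assms by auto
  moreover have "{K+1..K+(r-1)} \<inter> {K+r..P} = {}" by auto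
  ultimately have "(\<Sum>x\<in>{K+1..K+(P-K)}. wJ q K x) = (\<Sum>x\<in>{K+1..K+(r-1)}. wJ q K x) + (\<Sum>x\<in>{K+r..P}. wJ q K x)"
    by (simp add: sum.union_disjoint)
  thus ?thesis unfolding sum_right by simp
qed

lemma sum_lowmid: assumes "lo \<le> K + r" "r \<le> 0"
  shows "(\<Sum>x\<in>{lo..K+r-1}. wJ q K x) = Wf q (K - lo) - Wf q (- r)"
proof -
  have "{K-(K-lo)..K-1} = {lo..K+r-1} \<union> {K-(-r)..K-1}" using assms by auto
  moreover have "{lo..K+r-1} \<inter> {K-(-r)..K-1} = {}" by auto
  ultimately have "(\<Sum>x\<in>{K-(K-lo)..K-1}. wJ q K x) = (\<Sum>x\<in>{lo..K+r-1}. wJ q K x) + (\<Sum>x\<in>{K-(-r)..K-1}. wJ q K x)"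
    by (simp add: sum.union_disjoint)
  thus ?thesis unfolding sum_left by simp
qed

lemma sum_sub_le: "finite B \<Longrightarrow> A \<subseteq> B \<Longrightarrow> (\<Sum>x\<in>A. wJ q K x) \<le> (\<Sum>x\<in>B. wJ q K x)"
  by (rule sum_mono2) (auto intro: order_trans[OF _ wJ_pos])

lemma plus_lb: assumes "1 \<le> r" "0 \<le> K"
  shows "(\<Sum>x\<in>{x. x \<noteq> K \<and> (0 \<le> x \<and> K + r \<le> x \<and> x \<le> P)}. wJ q K x) \<ge> Wf q (P - K) - Wf q (r - 1)"
proof -
  have e: "{x. x \<noteq> K \<and> (0 \<le> x \<and> K + r \<le> x \<and> x \<le> P)} = {K+r..P}" using assms by auto
  show ?thesis
  proof (cases "K + r - 1 \<le> P")
    case True thus ?thesis unfolding e using sum_mid[OF True assms(1)] by simp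
  next
    case False
    hence "Wf q (P - K) \<le> Wf q (r - 1)" by (intro W_mono) simp
    moreover have "{K+r..P} = {}" using False by auto
    ultimately show ?thesis unfolding e by simp
  qed
qed

lemma plus_ub1: assumes "1 \<le> r" "0 \<le> K" "K + r - 1 \<le> P"
  shows "(\<Sum>x\<in>{x. x \<noteq> K \<and> (0 \<le> x \<and> K + r \<le> x \<and> x \<le> P)}. wJ q K x) = Wf q (P - K) - Wf q (r - 1)"
proof -
  have e: "{x. x \<noteq> K \<and> (0 \<le> x \<and> K + r \<le> x \<and> x \<le> P)} = {K+r..P}" using assms by auto
  show ?thesis unfolding e using sum_mid[OF assms(3) assms(1)] by simp
qed

lemma plus_empty: assumes "1 \<le> r" "0 \<le> K" "P < K + r"
  shows "(\<Sum>x\<in>{x. x \<noteq> K \<and> (0 \<le> x \<and> K + r \<le> x \<and> x \<le> P)}. wJ q K x) = 0"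
proof -
  have e: "{x. x \<noteq> K \<and> (0 \<le> x \<and> K + r \<le> x \<and> x \<le> P)} = {}" using assms by auto
  show ?thesis unfolding e by simp
qed

lemma plus_ub0: assumes "r \<le> 0"
  shows "(\<Sum>x\<in>{x. x \<noteq> K \<and> (0 \<le> x \<and> K + r \<le> x \<and> x \<le> P)}. wJ q K x) \<le> Wf q (- r) + Wf q (P - K)"
proof -
  have sub: "{x. x \<noteq> K \<and> (0 \<le> x \<and> K + r \<le> x \<and> x \<le> P)} \<subseteq> {K-(-r)..K-1} \<union> {K+1..K+(P-K)}" by auto
  have "(\<Sum>x\<in>{x. x \<noteq> K \<and> (0 \<le> x \<and> K + r \<le> x \<and> x \<le> P)}. wJ q K x) \<le> (\<Sum>x\<in>{K-(-r)..K-1} \<union> {K+1..K+(P-K)}. wJ q K x)"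
    by (rule sum_sub_le[OF _ sub]) simp
  also have "\<dots> = (\<Sum>x\<in>{K-(-r)..K-1}. wJ q K x) + (\<Sum>x\<in>{K+1..K+(P-K)}. wJ q K x)"
    by (rule sum.union_disjoint) auto
  finally show ?thesis unfolding sum_left sum_right .
qed

lemma minus_ub: assumes "1 \<le> r" "Q \<le> K"
  shows "(\<Sum>x\<in>{x. x \<noteq> K \<and> (0 \<le> x \<and> Q \<le> x \<and> x \<le> K + r - 1)}. wJ q K x) \<le> Wf q (K - Q) + Wf q (r - 1)"
proof -
  have sub: "{x. x \<noteq> K \<and> (0 \<le> x \<and> Q \<le> x \<and> x \<le> K + r - 1)} \<subseteq> {K-(K-Q)..K-1} \<union> {K+1..K+(r-1)}" by auto
  have "(\<Sum>x\<in>{x. x \<noteq> K \<and> (0 \<le> x \<and> Q \<le> x \<and> x \<le> K + r - 1)}. wJ q K x) \<le> (\<Sum>x\<in>{K-(K-Q)..K-1} \<union> {K+1..K+(r-1)}. wJ q K x)"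
    by (rule sum_sub_le[OF _ sub]) simp
  also have "\<dots> = (\<Sum>x\<in>{K-(K-Q)..K-1}. wJ q K x) + (\<Sum>x\<in>{K+1..K+(r-1)}. wJ q K x)"
    by (rule sum.union_disjoint) auto
  finally show ?thesis unfolding sum_left sum_right .
qed

lemma minus_lb1: assumes "1 \<le> r" "0 \<le> K" "Q \<le> K"
  shows "(\<Sum>x\<in>{x. x \<noteq> K \<and> (0 \<le> x \<and> Q \<le> x \<and> x \<le> K + r - 1)}. wJ q K x) \<ge> Wf q (K - max Q 0) + Wf q (r - 1)"
proof -
  have sub: "{K-(K - max Q 0)..K-1} \<union> {K+1..K+(r-1)} \<subseteq> {x. x \<noteq> K \<and> (0 \<le> x \<and> Q \<le> x \<and> x \<le> K + r - 1)}"
    using assms by auto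
  have "Wf q (K - max Q 0) + Wf q (r - 1) = (\<Sum>x\<in>{K-(K - max Q 0)..K-1}. wJ q K x) + (\<Sum>x\<in>{K+1..K+(r-1)}. wJ q K x)"
    unfolding sum_left sum_right ..
  also have "\<dots> = (\<Sum>x\<in>{K-(K - max Q 0)..K-1} \<union> {K+1..K+(r-1)}. wJ q K x)"
    by (rule sum.union_disjoint[symmetric]) auto
  also have "\<dots> \<le> (\<Sum>x\<in>{x. x \<noteq> K \<and> (0 \<le> x \<and> Q \<le> x \<and> x \<le> K + r - 1)}. wJ q K x)"
    by (rule sum_sub_le[OF _ sub]) auto
  finally show ?thesis .
qed

lemma minus_lb0: assumes "r \<le> 0"
  shows "(\<Sum>x\<in>{x. x \<noteq> K \<and> (0 \<le> x \<and> Q \<le> x \<and> x \<le> K + r - 1)}. wJ q K x) \<ge> Wf q (K - max Q 0) - Wf q (- r)"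
proof (cases "max Q 0 \<le> K + r")
  case True
  have sub: "{max Q 0..K+r-1} \<subseteq> {x. x \<noteq> K \<and> (0 \<le> x \<and> Q \<le> x \<and> x \<le> K + r - 1)}" using assms by auto
  have "Wf q (K - max Q 0) - Wf q (- r) = (\<Sum>x\<in>{max Q 0..K+r-1}. wJ q K x)"
    using sum_lowmid[OF True assms] by simp
  also have "\<dots> \<le> (\<Sum>x\<in>{x. x \<noteq> K \<and> (0 \<le> x \<and> Q \<le> x \<and> x \<le> K + r - 1)}. wJ q K x)"
    by (rule sum_sub_le[OF _ sub]) auto
  finally show ?thesis .
next
  case False
  hence "K - max Q 0 \<le> - r" unfolding max_def by (auto split: if_splits)
  hence "Wf q (K - max Q 0) \<le> Wf q (- r)" by (rule W_mono)
  moreover have "0 \<le> (\<Sum>x\<in>{x. x \<noteq> K \<and> (0 \<le> x \<and> Q \<le> x \<and> x \<le> K + r - 1)}. wJ q K x)"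
    by (intro sum_nonneg) (auto intro: order_trans[OF _ wJ_pos])
  ultimately show ?thesis by simp
qed

lemma V_low:
  fixes q r X :: int
  assumes q: "q \<ge> 2" and r: "r \<ge> 1" and X: "X \<ge> (q + 1) * r + 1 - q"
  shows "Vf q X \<ge> r - 1 + 2 * Vf q (r - 1) - int (Tf q (r - 1))"
proof -
  have Vr: "Vf q (r - 1) \<le> Vf q r" using V_mono[OF q, of "r - 1" r] r by simp
  consider "X \<ge> q * r + (r - 1)" | "q * r \<le> X" "X < q * r + (r - 1)" | "X < q * r" by linarith
  thus ?thesis
  proof cases
    case 1
    have "Vf q (q * r) + Vf q (X - q * r) \<le> Vf q (q * r + (X - q * r))"
      using 1 r q by (intro V_sup) auto
    hence "r + Vf q r + Vf q (X - q * r) \<le> Vf q X" using V_pN[OF q, of r] r by simp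
    moreover have "Vf q (r - 1) \<le> Vf q (X - q * r)" using 1 r q by (intro V_mono) auto
    ultimately show ?thesis using Vr by simp
  next
    case 2
    define aa where "aa = X - q * r"
    define bb where "bb = r - 1 - aa"
    have aa0: "aa \<ge> 0" "bb \<ge> 0" "bb < q" using 2 X unfolding aa_def bb_def by (auto simp: algebra_simps)
    have "Vf q (q * r) + Vf q aa \<le> Vf q (q * r + aa)"
      using aa0 r q by (intro V_sup) auto
    hence v1: "r + Vf q r + Vf q aa \<le> Vf q X" using V_pN[OF q, of r] r unfolding aa_def by simp
    have "Vf q (aa + bb) \<le> Vf q aa + Vf q bb + int (Tf q (aa + bb))" using V_carry[OF q aa0(1,2)] .
    moreover have "aa + bb = r - 1" unfolding bb_def by simp
    moreover have "Vf q bb = 0" using V_small[OF q aa0(3) aa0(2)] .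
    ultimately have "Vf q (r - 1) \<le> Vf q aa + int (Tf q (r - 1))" by simp
    thus ?thesis using v1 Vr by simp
  next
    case 3
    have rp: "r - 1 < q" using 3 X by (simp add: algebra_simps)
    hence V0: "Vf q (r - 1) = 0" using V_small[OF q] r by simp
    have "X \<ge> q * (r - 1)" using X r by (simp add: algebra_simps)
    hence "Vf q (q * (r - 1)) \<le> Vf q X" using r q by (intro V_mono) auto
    hence "r - 1 \<le> Vf q X" using V_pN[OF q, of "r - 1"] r V0 by simp
    thus ?thesis using V0 by simp
  qed
qed

lemma lin_auxB:
  fixes A B U U' pp rr Z V W T1 T2 rm :: real
  assumes "Z \<le> U + pp" "V \<le> A" "B - T2 \<le> W" "2 * A - 4 * B \<le> 2 * rr + 10" "U = U' + 2 * rr" "rm = rr - 1"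
  shows "Z + 2 * V + 2 * T1 - 4 * rm - 4 * W \<le> U' + pp + 14 + 2 * T1 + 4 * T2"
  using assms by linarith

lemma lin_auxC1:
  fixes A C U U' pp rr rho Z V Vr T1 :: real
  assumes "Z \<le> U + pp" "V \<le> A" "Vr \<le> C" "2 * A + 4 * C \<le> 2 * rr + 5" "U = U' + 2 * rr" "rr = - rho"
  shows "Z + 2 * V + 2 * T1 + 4 * rho + 4 * Vr \<le> U' + pp + 14 + 2 * T1"
  using assms by linarith

lemma lin_auxC2:
  fixes C D U U' pp rr rho Z VY Vr T :: real
  assumes "Z \<le> U + pp" "D - T \<le> VY" "Vr \<le> C" "- 2 * D + 4 * C \<le> 2 * rr + 7" "U = U' + 2 * rr" "rr = - rho"
  shows "Z - 2 * VY + 4 * rho + 4 * Vr \<le> U' + pp + 14 + 2 * T"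
  using assms by linarith

context prm begin

lemma du_ge: "x \<ge> 0 \<Longrightarrow> duI x \<ge> -1"
proof -
  assume x: "x \<ge> 0"
  have "(-1) * (pI + 1) \<le> x - T1" using x pf by simp
  hence "-1 \<le> (x - T1) div (pI + 1)" using le_div_iff_int[of "pI + 1" "-1" "x - T1"] bnds by simp
  thus ?thesis using du_lower[of x] by linarith
qed

lemma Q_le_K:
  assumes "n = int kb + 1 - dl + r" "r \<le> int kb + 1 - dl - duI (int kb)"
  shows "Qn n \<le> int kb"
proof (rule ccontr)
  assume "\<not> Qn n \<le> int kb"
  hence "gI (int kb) \<le> gI (Qn n - 1)" by (intro g_mono) simp
  moreover have "gI (int kb) \<ge> n - 2 + 2 * dl" unfolding gI_def using assms by simp
  ultimately show False using Q_g(2)[of n] by simp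
qed

lemma K_le_P:
  assumes "n = int kb + 1 - dl + r" "1 - (int kb + 1 - dl - duI (int kb)) \<le> r"
  shows "int kb \<le> Pn n"
proof (rule ccontr)
  assume "\<not> int kb \<le> Pn n"
  hence "duI (Pn n + 1) \<le> duI (int kb)" by (intro du_mono) simp
  moreover have "duI (int kb) \<le> n - 1" using assms by simp
  ultimately show False using P_du(2)[of n] by simp
qed

lemma d_new_half: "d_new p a s kb div 2 = int kb + 1 - dl - duI (int kb)"
  unfolding d_new_def d_Iw_def d_ur_eq by simp

lemma d_Iw_half: "d_Iw p a s kb div 2 = int kb + 1 - dl"
  unfolding d_Iw_def by simp

lemma inc_lower:
  assumes r1: "1 \<le> r" and rL: "r \<le> d_new p a s kb div 2"
  defines "n \<equiv> int kb + 1 - dl + r"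
  shows "2 * (vp_g_hat p a s n kb - vp_g_hat p a s (n - 1) kb) - (wt p a s kb - 2)
         \<ge> (pI - 1) * (r - 1) + 3 - 2 * int (Tf pI (r - 1))"
proof -
  define K where "K = int kb"
  define P where "P = Pn n"
  define Q where "Q = Qn n"
  define M where "M = P - K"
  define N where "N = K - Q"
  define X where "X = M - pI * N"
  have K0: "0 \<le> K" unfolding K_def by simp
  have QK: "Q \<le> K" unfolding Q_def K_def using Q_le_K[of n kb r] rL d_new_half n_def by simp
  have N0: "N \<ge> 0" unfolding N_def using QK by simp
  have a1: "2 * P \<ge> (pI + 1) * (K + r) + ke - pI" using A1(1)[of n] unfolding P_def n_def K_def by simp
  have a2: "P + pI * Q \<ge> (pI + 1) * (K + r) + 1 - pI" using A2(1)[of n] unfolding P_def Q_def n_def K_def by simp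
  have Xb: "X \<ge> (pI + 1) * r + 1 - pI" using a2 unfolding X_def M_def N_def by (simp add: algebra_simps)
  have X0: "X \<ge> 0"
  proof -
    define Y where "Y = (pI + 1) * r"
    have h: "pI + 1 \<le> Y" unfolding Y_def using mult_left_mono[of 1 r "pI + 1"] r1 bnds by simp
    have h2: "Y + 1 - pI \<le> X" using Xb unfolding Y_def .
    show ?thesis using h h2 by linarith
  qed
  have M0: "M \<ge> 0" using X0 N0 bnds unfolding X_def by (smt (verit) mult_nonneg_nonneg)
  have MpX: "M = pI * N + X" unfolding X_def by simp
  have p2: "pI \<ge> 2" using bnds by simp
  have pp: "prime pI" by (rule pI_prime)
  have inc: "vp_g_hat p a s n kb - vp_g_hat p a s (n - 1) kb \<ge> Wf pI M - Wf pI (r - 1) - (Wf pI N + Wf pI (r - 1))"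
  proof -
    have e1: "n - 1 + dl = K + r" "n - 2 + dl = K + r - 1" unfolding n_def K_def by simp_all
    have "(\<Sum>x\<in>{x. x \<noteq> K \<and> (0 \<le> x \<and> K + r \<le> x \<and> x \<le> P)}. wJ pI K x) \<ge> Wf pI (P - K) - Wf pI (r - 1)"
      using plus_lb[OF r1 K0] .
    moreover have "(\<Sum>x\<in>{x. x \<noteq> K \<and> (0 \<le> x \<and> Q \<le> x \<and> x \<le> K + r - 1)}. wJ pI K x) \<le> Wf pI (K - Q) + Wf pI (r - 1)"
      using minus_ub[OF r1 QK] .
    ultimately show ?thesis using inc_eq[of n kb] e1 unfolding P_def Q_def M_def N_def K_def by simp
  qed
  have WM: "Wf pI M = M + Vf pI M" using W_eq[OF pp M0] .
  have WN: "Wf pI N = N + Vf pI N" using W_eq[OF pp N0] .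
  have Wr: "Wf pI (r - 1) = r - 1 + Vf pI (r - 1)" using W_eq[OF pp, of "r - 1"] r1 by simp
  have VM: "Vf pI M \<ge> N + Vf pI N + Vf pI X"
  proof -
    have "Vf pI (pI * N) + Vf pI X \<le> Vf pI (pI * N + X)" using p2 N0 X0 by (intro V_sup) auto
    thus ?thesis using V_pN[OF p2 N0] MpX by simp
  qed
  have VX: "Vf pI X \<ge> r - 1 + 2 * Vf pI (r - 1) - int (Tf pI (r - 1))" using V_low[OF p2 r1 Xb] .
  have kk: "wt p a s kb = (pI - 1) * K + ke" unfolding wt_def K_def by (simp add: algebra_simps)
  have "2 * M - (wt p a s kb - 2) \<ge> (pI + 1) * r - pI + 2"
    using a1 unfolding M_def kk by (simp add: algebra_simps)
  thus ?thesis using inc WM WN Wr VM VX by (simp add: algebra_simps)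
qed

lemma ke_le: "ke \<le> pI" "ke \<ge> 2"
proof -
  have "rs + int s < (dl + 1) * (pI - 1)" "dl * (pI - 1) \<le> rs + int s" using params by auto
  thus "ke \<le> pI" "ke \<ge> 2" using params(6) by (simp_all add: algebra_simps)
qed

lemma T_le_big: "m \<le> B \<Longrightarrow> Tf pI m \<le> Tf pI B"
proof (cases "m < 0")
  case True thus ?thesis by (simp add: Tf_def)
next
  case False
  assume "m \<le> B" thus ?thesis using T_mono[of pI m B] False bnds by simp
qed

lemma inc_upper:
  assumes rl: "1 - d_new p a s kb div 2 \<le> r" and rL: "r \<le> d_new p a s kb div 2"
  defines "n \<equiv> int kb + 1 - dl + r"
  shows "real_of_int (2 * (vp_g_hat p a s n kb - vp_g_hat p a s (n - 1) kb) - (wt p a s kb - 2))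
         \<le> (real p - 1) * real_of_int r + real p + 14 + 8 * real (Tf pI (pI ^ 2 * wt p a s kb))"
proof -
  define K where "K = int kb"
  define k where "k = wt p a s kb"
  define inc where "inc = vp_g_hat p a s n kb - vp_g_hat p a s (n - 1) kb"
  define P where "P = Pn n"
  define Q where "Q = Qn n"
  define M where "M = P - K"
  define N where "N = K - max Q 0"
  define X where "X = M - pI * N"
  define TB where "TB = Tf pI (pI ^ 2 * k)"
  have K0: "0 \<le> K" unfolding K_def by simp
  have Ldef: "d_new p a s kb div 2 = K + 1 - dl - duI K" unfolding K_def by (rule d_new_half)
  have QK: "Q \<le> K" unfolding Q_def K_def using Q_le_K[of n kb r] rL d_new_half n_def by simp
  have N0: "N \<ge> 0" "N \<le> K" unfolding N_def using QK K0 by auto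
  have duK: "duI K \<ge> -1" using du_ge K0 by simp
  have Kr: "K + r \<ge> -1" using rl Ldef duK pf by linarith
  have rK: "r \<le> K + 2" using rL Ldef duK pf by linarith
  have a1: "2 * P \<le> (pI + 1) * (K + r) + ke - 2 + pI" using A1(2)[of n] unfolding P_def n_def K_def by simp
  have a2: "P + pI * Q \<le> (pI + 1) * (K + r) + pI" using A2(2)[of n] unfolding P_def Q_def n_def K_def by simp
  have a2l: "P + pI * Q \<ge> (pI + 1) * (K + r) + 1 - pI" using A2(1)[of n] unfolding P_def Q_def n_def K_def by simp
  have kk: "k = (pI - 1) * K + ke" unfolding k_def wt_def K_def by (simp add: algebra_simps)
  have k2: "k \<ge> 2" using kk ke_le K0 bnds by (smt (verit) mult_nonneg_nonneg)
  have p2: "pI \<ge> 2" using bnds by simp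
  have pp: "prime pI" by (rule pI_prime)
  have twoM: "2 * M - (k - 2) \<le> (pI + 1) * r + pI" using a1 unfolding M_def kk by (simp add: algebra_simps)
  have Xb: "X \<le> (pI + 1) * r + 2 * pI"
  proof (cases "Q \<ge> 0")
    case True
    hence "X = P + pI * Q - (pI + 1) * K" unfolding X_def M_def N_def by (simp add: algebra_simps)
    thus ?thesis using a2 by (simp add: algebra_simps)
  next
    case False
    hence "X = P - (pI + 1) * K" unfolding X_def M_def N_def by (simp add: algebra_simps)
    moreover have "(pI + 1) * (K + r) \<ge> (pI + 1) * (-1)" using Kr bnds by (intro mult_left_mono) auto
    ultimately show ?thesis using a1 ke_le by (simp add: algebra_simps)
  qed
  have Xl: "X \<ge> (pI + 1) * r + 1 - pI"
  proof -
    have "pI * N \<le> pI * (K - Q)" unfolding N_def using bnds by (intro mult_left_mono) auto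
    thus ?thesis using a2l unfolding X_def M_def by (simp add: algebra_simps)
  qed
  have MpX: "M = pI * N + X" unfolding X_def by simp
  define Bg where "Bg = (pI + 1) * (K + 2) + pI"
  have Bg: "Bg \<le> pI * pI * k"
  proof -
    have kK: "k \<ge> 6 * K + 2"
    proof -
      have "(pI - 1) * K \<ge> 6 * K" using bnds K0 by (intro mult_right_mono) auto
      thus ?thesis using kk ke_le by simp
    qed
    have h1: "pI * pI \<ge> 7 * pI" using bnds by (intro mult_right_mono) auto
    have h2: "pI * pI * k \<ge> pI * pI * (6 * K + 2)" using kK bnds by (intro mult_left_mono) auto
    have h3: "pI * pI * K \<ge> 7 * pI * K" using h1 K0 p7 by (intro mult_right_mono) auto
    have h4: "pI * K \<ge> 7 * K" using bnds K0 by (intro mult_right_mono) auto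
    have "Bg = pI * K + K + 3 * pI + 2" unfolding Bg_def by (simp add: algebra_simps)
    moreover have "pI * pI * (6 * K + 2) = 6 * (pI * pI * K) + 2 * (pI * pI)" by (simp add: algebra_simps)
    ultimately show ?thesis using h1 h2 h3 h4 bnds K0 by linarith
  qed
  have TBg: "Tf pI Bg \<le> Tf pI (pI ^ 2 * k)" using Bg T_le_big by (simp add: power2_eq_square)
  have Mb: "M \<le> Bg"
  proof -
    have "(pI + 1) * (K + r) \<le> (pI + 1) * (K + K + 2)" using rK bnds by (intro mult_left_mono) auto
    thus ?thesis using a1 ke_le K0 unfolding M_def Bg_def by (simp add: algebra_simps)
  qed
  have NpK: "pI * N \<le> pI * K" using N0 bnds by (intro mult_left_mono) auto
  have Bgeq: "Bg = pI * K + K + 3 * pI + 2" unfolding Bg_def by (simp add: algebra_simps)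
  have pKB: "pI * K \<le> Bg" using Bgeq K0 bnds by linarith
  have pK0: "pI * K \<ge> 0" using K0 bnds by simp
  have rB: "r - 1 \<le> Bg" using Bgeq rK K0 bnds pK0 by linarith
  have TM: "Tf pI M \<le> TB" unfolding TB_def using T_le_big[OF Mb] TBg by simp
  have Tr: "Tf pI (r - 1) \<le> TB" unfolding TB_def using T_le_big[OF rB] TBg by simp
  have e1: "n - 1 + dl = K + r" "n - 2 + dl = K + r - 1" unfolding n_def K_def by simp_all
  have incE: "inc = (\<Sum>x\<in>{x. x \<noteq> K \<and> (0 \<le> x \<and> K + r \<le> x \<and> x \<le> P)}. wJ pI K x) -
                   (\<Sum>x\<in>{x. x \<noteq> K \<and> (0 \<le> x \<and> Q \<le> x \<and> x \<le> K + r - 1)}. wJ pI K x)"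
    using inc_eq[of n kb] e1 unfolding inc_def P_def Q_def K_def by simp
  have minus0: "(\<Sum>x\<in>{x. x \<noteq> K \<and> (0 \<le> x \<and> Q \<le> x \<and> x \<le> K + r - 1)}. wJ pI K x) \<ge> 0"
    by (intro sum_nonneg) (auto intro: order_trans[OF _ wJ_pos])
  have pr: "real p \<ge> 7" using p7 by simp
  have rid: "(real p + 1) * real_of_int r = (real p - 1) * real_of_int r + 2 * real_of_int r" by (simp add: algebra_simps)
  have twoMr: "real_of_int (2 * M - (k - 2)) \<le> (real p + 1) * real_of_int r + real p"
    using twoM by (metis (mono_tags, opaque_lifting) of_int_add of_int_le_iff of_int_mult of_int_of_nat_eq of_nat_1 of_nat_add)
  have goal: "real_of_int (2 * inc - (k - 2)) \<le> (real p - 1) * real_of_int r + real p + 14 + 8 * real TB"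
  proof (cases "r \<ge> 1")
    case r1: True
    show ?thesis
    proof (cases "P < K + r")
      case True
      have "inc \<le> 0" using incE plus_empty[OF r1 K0 True] minus0 by simp
      hence "real_of_int (2 * inc - (k - 2)) \<le> 0" using k2 by simp
      moreover have "(real p - 1) * real_of_int r \<ge> 0" using r1 pr by simp
      ultimately show ?thesis by simp
    next
      case False
      have M0: "M \<ge> 0" using False r1 unfolding M_def by simp
      have X0: "X \<ge> 0"
      proof -
        define Y where "Y = (pI + 1) * r"
        have h: "pI + 1 \<le> Y" unfolding Y_def using mult_left_mono[of 1 r "pI + 1"] r1 bnds by simp
        show ?thesis using h Xl unfolding Y_def by linarith
      qed
      have pl: "(\<Sum>x\<in>{x. x \<noteq> K \<and> (0 \<le> x \<and> K + r \<le> x \<and> x \<le> P)}. wJ pI K x) = Wf pI M - Wf pI (r - 1)"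
        using plus_ub1[OF r1 K0] False unfolding M_def by simp
      have mi: "(\<Sum>x\<in>{x. x \<noteq> K \<and> (0 \<le> x \<and> Q \<le> x \<and> x \<le> K + r - 1)}. wJ pI K x) \<ge> Wf pI N + Wf pI (r - 1)"
        using minus_lb1[OF r1 K0 QK] unfolding N_def by simp
      have WM: "Wf pI M = M + Vf pI M" using W_eq[OF pp M0] .
      have WN: "Wf pI N = N + Vf pI N" using W_eq[OF pp N0(1)] .
      have Wr: "Wf pI (r - 1) = r - 1 + Vf pI (r - 1)" using W_eq[OF pp, of "r - 1"] r1 by simp
      have VM: "Vf pI M \<le> N + Vf pI N + Vf pI X + int (Tf pI M)"
      proof -
        have "pI * N \<ge> 0" using N0 bnds by simp
        hence "Vf pI (pI * N + X) \<le> Vf pI (pI * N) + Vf pI X + int (Tf pI (pI * N + X))"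
          using V_carry[OF p2 _ X0] by simp
        thus ?thesis using V_pN[OF p2 N0(1)] MpX by simp
      qed
      have incB: "inc \<le> M + Vf pI X + int (Tf pI M) - 2 * (r - 1) - 2 * Vf pI (r - 1)"
        using incE pl mi WM WN Wr VM by simp
      have vx: "real_of_int (Vf pI X) \<le> real_of_int X / (real p - 1)" using V_ub[OF p2 X0] by simp
      have vr: "real_of_int (Vf pI (r - 1)) \<ge> (real_of_int (r - 1) + 1 - real p) / (real p - 1) - real (Tf pI (r - 1))"
        using V_lb[OF p2, of "r - 1"] r1 by simp
      have frac: "2 * (real_of_int X / (real p - 1)) - 4 * ((real_of_int (r - 1) + 1 - real p) / (real p - 1))
                  \<le> 2 * real_of_int r + 10"
      proof -
        have f1: "2 * (real_of_int X / (real p - 1)) = (2 * real_of_int X) / (real p - 1)" by simp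
        have f2: "4 * ((real_of_int (r - 1) + 1 - real p) / (real p - 1)) = (4 * (real_of_int r - real p)) / (real p - 1)"
          by simp
        have "2 * (real_of_int X / (real p - 1)) - 4 * ((real_of_int (r - 1) + 1 - real p) / (real p - 1))
              = (2 * real_of_int X - 4 * (real_of_int r - real p)) / (real p - 1)" unfolding f1 f2 by (simp add: diff_divide_distrib)
        also have "\<dots> \<le> 2 * real_of_int r + 10"
        proof -
          have "real_of_int X \<le> (real p + 1) * real_of_int r + 2 * real p"
            using Xb by (metis (mono_tags, opaque_lifting) of_int_add of_int_le_iff of_int_mult of_int_of_nat_eq of_nat_1 of_nat_add of_int_numeral)
          hence "2 * real_of_int X - 4 * (real_of_int r - real p) \<le> (2 * real_of_int r + 10) * (real p - 1)"
            using pr by (simp add: algebra_simps)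
          thus ?thesis using pr by (simp add: pos_divide_le_eq)
        qed
        finally show ?thesis .
      qed
      have "real_of_int (2 * inc - (k - 2)) \<le> real_of_int (2 * M - (k - 2)) + 2 * real_of_int (Vf pI X)
              + 2 * real (Tf pI M) - 4 * real_of_int (r - 1) - 4 * real_of_int (Vf pI (r - 1))"
        using incB by simp
      also have "\<dots> \<le> (real p - 1) * real_of_int r + real p + 14 + 2 * real (Tf pI M) + 4 * real (Tf pI (r - 1))"
      proof -
        have e: "real_of_int (r - 1) = real_of_int r - 1" by simp
        define A where "A = real_of_int X / (real p - 1)"
        define B where "B = (real_of_int (r - 1) + 1 - real p) / (real p - 1)"
        define U where "U = (real p + 1) * real_of_int r"
        define U' where "U' = (real p - 1) * real_of_int r"
        have h1: "real_of_int (2 * M - (k - 2)) \<le> U + real p" using twoMr unfolding U_def .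
        have h2: "real_of_int (Vf pI X) \<le> A" using vx unfolding A_def .
        have h3: "B - real (Tf pI (r - 1)) \<le> real_of_int (Vf pI (r - 1))" using vr unfolding B_def .
        have h4: "2 * A - 4 * B \<le> 2 * real_of_int r + 10" using frac unfolding A_def B_def .
        have h5: "U = U' + 2 * real_of_int r" using rid unfolding U_def U'_def .
        have "real_of_int (2 * M - (k - 2)) + 2 * real_of_int (Vf pI X) + 2 * real (Tf pI M)
              - 4 * real_of_int (r - 1) - 4 * real_of_int (Vf pI (r - 1))
              \<le> U' + real p + 14 + 2 * real (Tf pI M) + 4 * real (Tf pI (r - 1))"
          by (rule lin_auxB[OF h1 h2 h3 h4 h5 e])
        thus ?thesis unfolding U'_def .
      qed
      also have "\<dots> \<le> (real p - 1) * real_of_int r + real p + 14 + 8 * real TB"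
        using TM Tr by simp
      finally show ?thesis .
    qed
  next
    case False
    hence r0: "r \<le> 0" by simp
    define \<rho> where "\<rho> = - r"
    have \<rho>0: "\<rho> \<ge> 0" unfolding \<rho>_def using r0 by simp
    have M0: "M \<ge> 0" using K_le_P[of n kb r] rl d_new_half n_def unfolding M_def P_def K_def by simp
    have pl: "(\<Sum>x\<in>{x. x \<noteq> K \<and> (0 \<le> x \<and> K + r \<le> x \<and> x \<le> P)}. wJ pI K x) \<le> Wf pI \<rho> + Wf pI M"
      using plus_ub0[OF r0] unfolding M_def \<rho>_def by simp
    have mi: "(\<Sum>x\<in>{x. x \<noteq> K \<and> (0 \<le> x \<and> Q \<le> x \<and> x \<le> K + r - 1)}. wJ pI K x) \<ge> Wf pI N - Wf pI \<rho>"
      using minus_lb0[OF r0] unfolding N_def \<rho>_def by simp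
    have WM: "Wf pI M = M + Vf pI M" using W_eq[OF pp M0] .
    have WN: "Wf pI N = N + Vf pI N" using W_eq[OF pp N0(1)] .
    have Wr: "Wf pI \<rho> = \<rho> + Vf pI \<rho>" using W_eq[OF pp \<rho>0] .
    have vrho: "real_of_int (Vf pI \<rho>) \<le> real_of_int \<rho> / (real p - 1)" using V_ub[OF p2 \<rho>0] by simp
    have incC: "inc \<le> M + Vf pI M - N - Vf pI N + 2 * \<rho> + 2 * Vf pI \<rho>"
      using incE pl mi WM WN Wr by simp
    have rr: "real_of_int r = - real_of_int \<rho>" unfolding \<rho>_def by simp
    have Xbr: "real_of_int X \<le> (real p + 1) * real_of_int r + 2 * real p"
      using Xb by (metis (mono_tags, opaque_lifting) of_int_add of_int_le_iff of_int_mult of_int_of_nat_eq of_nat_1 of_nat_add of_int_numeral)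
    show ?thesis
    proof (cases "X \<ge> 0")
      case X0: True
      have VM: "Vf pI M \<le> N + Vf pI N + Vf pI X + int (Tf pI M)"
      proof -
        have "pI * N \<ge> 0" using N0 bnds by simp
        hence "Vf pI (pI * N + X) \<le> Vf pI (pI * N) + Vf pI X + int (Tf pI (pI * N + X))"
          using V_carry[OF p2 _ X0] by simp
        thus ?thesis using V_pN[OF p2 N0(1)] MpX by simp
      qed
      have vx: "real_of_int (Vf pI X) \<le> real_of_int X / (real p - 1)" using V_ub[OF p2 X0] by simp
      have frac: "2 * (real_of_int X / (real p - 1)) + 4 * (real_of_int \<rho> / (real p - 1)) \<le> 2 * real_of_int r + 5"
      proof -
        have "2 * (real_of_int X / (real p - 1)) + 4 * (real_of_int \<rho> / (real p - 1))
              = (2 * real_of_int X + 4 * real_of_int \<rho>) / (real p - 1)" by (simp add: add_divide_distrib)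
        also have "\<dots> \<le> 2 * real_of_int r + 5"
        proof -
          have "2 * real_of_int X + 4 * real_of_int \<rho> \<le> (2 * real_of_int r + 5) * (real p - 1)"
            using Xbr rr pr by (simp add: algebra_simps)
          thus ?thesis using pr by (simp add: pos_divide_le_eq)
        qed
        finally show ?thesis .
      qed
      have "real_of_int (2 * inc - (k - 2)) \<le> real_of_int (2 * M - (k - 2)) + 2 * real_of_int (Vf pI X)
              + 2 * real (Tf pI M) + 4 * real_of_int \<rho> + 4 * real_of_int (Vf pI \<rho>)"
        using incC VM by simp
      also have "\<dots> \<le> (real p - 1) * real_of_int r + real p + 14 + 2 * real (Tf pI M)"
        using lin_auxC1[OF twoMr vx vrho frac rid rr] by simp
      also have "\<dots> \<le> (real p - 1) * real_of_int r + real p + 14 + 8 * real TB"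
        using TM by simp
      finally show ?thesis .
    next
      case False
      define Y where "Y = - X"
      have Y0: "Y \<ge> 0" unfolding Y_def using False by simp
      have VM: "Vf pI M \<le> N + Vf pI N - Vf pI Y"
      proof -
        have "Vf pI M + Vf pI Y \<le> Vf pI (M + Y)" using V_sup[OF p2 M0 Y0] .
        moreover have "M + Y = pI * N" unfolding Y_def X_def by simp
        ultimately show ?thesis using V_pN[OF p2 N0(1)] by simp
      qed
      have YB: "Y \<le> Bg" unfolding Y_def X_def using M0 NpK pKB by simp
      have TY: "Tf pI Y \<le> TB" unfolding TB_def using T_le_big[OF YB] TBg by simp
      have vy: "real_of_int (Vf pI Y) \<ge> (real_of_int Y + 1 - real p) / (real p - 1) - real (Tf pI Y)"
        using V_lb[OF p2 Y0] by simp
      have frac: "- 2 * ((real_of_int Y + 1 - real p) / (real p - 1)) + 4 * (real_of_int \<rho> / (real p - 1)) \<le> 2 * real_of_int r + 7"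
      proof -
        have "- 2 * ((real_of_int Y + 1 - real p) / (real p - 1)) + 4 * (real_of_int \<rho> / (real p - 1))
              = (- 2 * (real_of_int Y + 1 - real p) + 4 * real_of_int \<rho>) / (real p - 1)" by (simp add: add_divide_distrib)
        also have "\<dots> \<le> 2 * real_of_int r + 7"
        proof -
          have "real_of_int Y = - real_of_int X" unfolding Y_def by simp
          hence "- 2 * (real_of_int Y + 1 - real p) + 4 * real_of_int \<rho> \<le> (2 * real_of_int r + 7) * (real p - 1)"
            using Xbr rr pr by (simp add: algebra_simps)
          thus ?thesis using pr by (simp add: pos_divide_le_eq)
        qed
        finally show ?thesis .
      qed
      have "real_of_int (2 * inc - (k - 2)) \<le> real_of_int (2 * M - (k - 2)) - 2 * real_of_int (Vf pI Y)
              + 4 * real_of_int \<rho> + 4 * real_of_int (Vf pI \<rho>)"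
        using incC VM by simp
      also have "\<dots> \<le> (real p - 1) * real_of_int r + real p + 14 + 2 * real (Tf pI Y)"
        using lin_auxC2[OF twoMr vy vrho frac rid rr] by simp
      also have "\<dots> \<le> (real p - 1) * real_of_int r + real p + 14 + 8 * real TB"
        using TY by simp
      finally show ?thesis .
    qed
  qed
  thus ?thesis unfolding inc_def k_def TB_def .
qed


end

lemma tele_lb:
  fixes D :: "int \<Rightarrow> real"
  assumes h: "\<And>r. l \<le> r \<Longrightarrow> r \<le> j \<Longrightarrow> D r - D (r - 1) \<ge> \<beta>" and lj: "l - 1 \<le> j"
  shows "D j - D (l - 1) \<ge> real_of_int (j - l + 1) * \<beta>"
  using lj h
proof (induction j rule: int_ge_induct)
  case base thus ?case by simp
next
  case (step i)
  have "D i - D (l - 1) \<ge> real_of_int (i - l + 1) * \<beta>" using step by auto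
  moreover have "D (i + 1) - D (i + 1 - 1) \<ge> \<beta>" using step.prems[of "i + 1"] step.hyps by simp
  ultimately show ?case by (simp add: algebra_simps)
qed

lemma tele_ub:
  fixes D :: "int \<Rightarrow> real"
  assumes h: "\<And>r. i + 1 \<le> r \<Longrightarrow> r \<le> l \<Longrightarrow> D r - D (r - 1) \<le> \<gamma>" and il: "i \<le> l"
  shows "D l - D i \<le> real_of_int (l - i) * \<gamma>"
  using il h
proof (induction l rule: int_ge_induct)
  case base thus ?case by simp
next
  case (step m)
  have "D m - D i \<le> real_of_int (m - i) * \<gamma>" using step by auto
  moreover have "D (m + 1) - D (m + 1 - 1) \<le> \<gamma>" using step.prems[of "m + 1"] step.hyps by simp
  ultimately show ?case by (simp add: algebra_simps)
qed

context prm begin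

lemma t_eq: "2 * (Delta' p a s kb r - Delta' p a s kb (r - 1)) =
   real_of_int (2 * (vp_g_hat p a s (int kb + 1 - dl + r) kb - vp_g_hat p a s (int kb + 1 - dl + r - 1) kb) - (wt p a s kb - 2))"
proof -
  have e: "d_Iw p a s kb div 2 + (r - 1) = int kb + 1 - dl + r - 1" "d_Iw p a s kb div 2 + r = int kb + 1 - dl + r"
    using d_Iw_half by simp_all
  define c where "c = (real_of_int (wt p a s kb) - 2) / 2"
  have c2: "2 * c = real_of_int (wt p a s kb) - 2" unfolding c_def by simp
  have "2 * (Delta' p a s kb r - Delta' p a s kb (r - 1)) =
        2 * real_of_int (vp_g_hat p a s (int kb + 1 - dl + r) kb) - 2 * real_of_int (vp_g_hat p a s (int kb + 1 - dl + r - 1) kb) - 2 * c"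
    unfolding Delta'_def e c_def[symmetric] by (simp add: algebra_simps)
  thus ?thesis using c2 by simp
qed

lemma slope_bounds:
  assumes l1: "1 \<le> l" and lL: "l \<le> d_new p a s kb div 2"
  shows "2 * (Delta p a s kb l - Delta p a s kb (l - 1)) \<ge> (real p - 1) * real_of_int (l - 1) + 3 - 2 * real (Tf pI (l - 1))"
        "2 * (Delta p a s kb l - Delta p a s kb (l - 1)) \<le> (real p - 1) * real_of_int l + real p + 14 + 8 * real (Tf pI (pI ^ 2 * wt p a s kb))"
proof -
  define L where "L = d_new p a s kb div 2"
  define D where "D = Delta' p a s kb"
  define TB where "TB = real (Tf pI (pI ^ 2 * wt p a s kb))"
  have Dl: "\<And>x. Delta p a s kb x = lower_hull_val (ptsS L D) (real_of_int x)"
    unfolding Delta_def ptsS_def L_def D_def by simp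
  have tl: "\<And>r. 1 \<le> r \<Longrightarrow> r \<le> L \<Longrightarrow> 2 * (D r - D (r - 1)) \<ge> (real p - 1) * real_of_int (r - 1) + 3 - 2 * real (Tf pI (r - 1))"
  proof -
    fix r assume r: "1 \<le> r" "r \<le> L"
    have "(pI - 1) * (r - 1) + 3 - 2 * int (Tf pI (r - 1)) \<le>
          2 * (vp_g_hat p a s (int kb + 1 - dl + r) kb - vp_g_hat p a s (int kb + 1 - dl + r - 1) kb) - (wt p a s kb - 2)"
      using inc_lower[of r kb] r unfolding L_def by simp
    hence "real_of_int ((pI - 1) * (r - 1) + 3 - 2 * int (Tf pI (r - 1))) \<le> 2 * (D r - D (r - 1))"
      unfolding D_def t_eq by (simp only: of_int_le_iff)
    thus "2 * (D r - D (r - 1)) \<ge> (real p - 1) * real_of_int (r - 1) + 3 - 2 * real (Tf pI (r - 1))" by simp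
  qed
  have tu: "\<And>r. 1 - L \<le> r \<Longrightarrow> r \<le> L \<Longrightarrow> 2 * (D r - D (r - 1)) \<le> (real p - 1) * real_of_int r + real p + 14 + 8 * TB"
  proof -
    fix r assume r: "1 - L \<le> r" "r \<le> L"
    show "2 * (D r - D (r - 1)) \<le> (real p - 1) * real_of_int r + real p + 14 + 8 * TB"
      using inc_upper[of kb r] r unfolding L_def D_def t_eq TB_def by simp
  qed
  obtain j where j: "l \<le> j" "j \<le> L" "(D j - D (l - 1)) / real_of_int (j - l + 1) \<le> Delta p a s kb l - Delta p a s kb (l - 1)"
    using hull_slope_lb[OF l1, of L D] lL unfolding Dl L_def by auto
  define \<beta> where "\<beta> = ((real p - 1) * real_of_int (l - 1) + 3 - 2 * real (Tf pI (l - 1))) / 2"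
  have tb: "\<And>r. l \<le> r \<Longrightarrow> r \<le> j \<Longrightarrow> D r - D (r - 1) \<ge> \<beta>"
  proof -
    fix r assume r: "l \<le> r" "r \<le> j"
    have t1: "2 * (D r - D (r - 1)) \<ge> (real p - 1) * real_of_int (r - 1) + 3 - 2 * real (Tf pI (r - 1))"
      using tl[of r] r j l1 by simp
    have "Tf pI (l - 1 + int (nat (r - l))) \<le> Tf pI (l - 1) + nat (r - l)"
      using T_diff[of pI "l - 1" "nat (r - l)"] l1 bnds by simp
    moreover have "l - 1 + int (nat (r - l)) = r - 1" using r by simp
    ultimately have Td: "real (Tf pI (r - 1)) \<le> real (Tf pI (l - 1)) + real_of_int (r - l)" using r by simp
    have "(real p - 1) * real_of_int (r - 1) = (real p - 1) * real_of_int (l - 1) + (real p - 1) * real_of_int (r - l)"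
      by (simp add: algebra_simps)
    moreover have "(real p - 1) * real_of_int (r - l) \<ge> 2 * real_of_int (r - l)"
      using r p7 by (intro mult_right_mono) auto
    ultimately show "D r - D (r - 1) \<ge> \<beta>" unfolding \<beta>_def using t1 Td by simp
  qed
  have "D j - D (l - 1) \<ge> real_of_int (j - l + 1) * \<beta>" using tele_lb[of l j \<beta> D] tb j by simp
  hence "(D j - D (l - 1)) / real_of_int (j - l + 1) \<ge> \<beta>" using j by (simp add: le_divide_eq mult.commute)
  hence "Delta p a s kb l - Delta p a s kb (l - 1) \<ge> \<beta>" using j(3) by simp
  thus "2 * (Delta p a s kb l - Delta p a s kb (l - 1)) \<ge> (real p - 1) * real_of_int (l - 1) + 3 - 2 * real (Tf pI (l - 1))"
    unfolding \<beta>_def by simp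
  have l1L: "- L + 1 \<le> l" using l1 lL unfolding L_def by simp
  obtain i where i: "- L \<le> i" "i \<le> l - 1" "Delta p a s kb l - Delta p a s kb (l - 1) \<le> (D l - D i) / real_of_int (l - i)"
    using hull_slope_ub[OF l1L, of D] lL unfolding Dl L_def by auto
  define \<gamma> where "\<gamma> = ((real p - 1) * real_of_int l + real p + 14 + 8 * TB) / 2"
  have tg: "\<And>r. i + 1 \<le> r \<Longrightarrow> r \<le> l \<Longrightarrow> D r - D (r - 1) \<le> \<gamma>"
  proof -
    fix r assume r: "i + 1 \<le> r" "r \<le> l"
    have "2 * (D r - D (r - 1)) \<le> (real p - 1) * real_of_int r + real p + 14 + 8 * TB"
      using tu[of r] r i lL unfolding L_def by simp
    moreover have "(real p - 1) * real_of_int r \<le> (real p - 1) * real_of_int l"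
      using r p7 by (intro mult_left_mono) auto
    ultimately show "D r - D (r - 1) \<le> \<gamma>" unfolding \<gamma>_def by simp
  qed
  have "D l - D i \<le> real_of_int (l - i) * \<gamma>" using tele_ub[of i l D \<gamma>] tg i by simp
  hence "(D l - D i) / real_of_int (l - i) \<le> \<gamma>" using i by (simp add: divide_le_eq mult.commute)
  hence "Delta p a s kb l - Delta p a s kb (l - 1) \<le> \<gamma>" using i(3) by simp
  thus "2 * (Delta p a s kb l - Delta p a s kb (l - 1)) \<le> (real p - 1) * real_of_int l + real p + 14 + 8 * real (Tf pI (pI ^ 2 * wt p a s kb))"
    unfolding \<gamma>_def TB_def by simp
qed

end

lemma ln_p_ge1: "(p::real) \<ge> 7 \<Longrightarrow> ln p \<ge> 1"
proof -
  assume p: "p \<ge> 7"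
  have "exp 1 \<le> p" using exp_le p by linarith
  hence "ln (exp 1) \<le> ln p" using p by (subst ln_le_cancel_iff) auto
  thus ?thesis by simp
qed

lemma log_sq_le: fixes p l :: real assumes p: "p \<ge> 7" and l: "l \<ge> 1"
  shows "(log p l)\<^sup>2 \<le> (p + 1) * (l - 1)"
proof -
  have lp: "ln p \<ge> 1" using ln_p_ge1[OF p] .
  have ln0: "ln l \<ge> 0" using l by simp
  have "log p l = ln l / ln p" by (simp add: log_def)
  also have "\<dots> \<le> ln l" using lp ln0 by (simp add: divide_le_eq mult_le_cancel_left1)
  finally have lg: "log p l \<le> ln l" .
  have lg0: "log p l \<ge> 0" using l p by simp
  have "ln (sqrt l) \<le> sqrt l - 1" using l by (intro ln_le_minus_one) simp
  hence ls: "ln l \<le> 2 * (sqrt l - 1)" using ln_sqrt[of l] l by simp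
  have sq1: "sqrt l \<ge> 1" using l by simp
  have "(log p l)\<^sup>2 \<le> (ln l)\<^sup>2" using lg lg0 by (intro power_mono) auto
  also have "\<dots> \<le> (2 * (sqrt l - 1))\<^sup>2" using ls ln0 by (intro power_mono) auto
  also have "\<dots> = 4 * (l - 2 * sqrt l + 1)" using l by (simp add: power2_eq_square algebra_simps)
  also have "\<dots> \<le> 4 * (l - 1)" using sq1 by simp
  also have "\<dots> \<le> (p + 1) * (l - 1)" using p l by (intro mult_right_mono) auto
  finally show ?thesis .
qed

lemma quad_aux: fixes b x t :: real assumes b: "0 < b" "b \<le> 3" and x: "t \<le> x"
  shows "b * (3 - 2 * t) + x\<^sup>2 \<ge> 0"
proof -
  have "b * (3 - 2 * t) \<ge> b * (3 - 2 * x)" using b x by (intro mult_left_mono) auto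
  moreover have "b * (3 - 2 * x) + x\<^sup>2 = (x - b)\<^sup>2 + b * (3 - b)" by (simp add: power2_eq_square algebra_simps)
  moreover have "(x - b)\<^sup>2 \<ge> 0" by simp
  moreover have "b * (3 - b) \<ge> 0" using b by simp
  ultimately show ?thesis by linarith
qed

lemma lin_sq_aux: fixes A B y x0 :: real assumes "0 < x0" "x0 \<le> y" "0 \<le> A" "0 \<le> B"
  shows "A + B * y \<le> (A / x0\<^sup>2 + B / x0) * y\<^sup>2"
proof -
  have y0: "y > 0" using assms by simp
  have "x0\<^sup>2 \<le> y\<^sup>2" using assms by (intro power_mono) auto
  hence "A \<le> A / x0\<^sup>2 * y\<^sup>2" using assms by (simp add: field_simps mult_left_mono)
  moreover have "B * y \<le> B / x0 * y\<^sup>2"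
  proof -
    have "B * y * x0 \<le> B * y * y" using assms y0 by (intro mult_left_mono) auto
    hence "B * y \<le> B * y * y / x0" using assms by (simp add: field_simps)
    thus ?thesis by (simp add: power2_eq_square)
  qed
  ultimately show ?thesis by (simp add: distrib_right)
qed


context prm begin

lemma T_le_log: assumes "1 \<le> l" shows "real (Tf pI (l - 1)) \<le> log (real p) (real_of_int l)"
proof (cases "l = 1")
  case True thus ?thesis by (simp add: Tf_def)
next
  case False
  hence l2: "l - 1 \<ge> 1" using assms by simp
  have "real (Tf pI (l - 1)) \<le> log (real_of_int pI) (real_of_int (l - 1))" using T_log[of pI "l - 1"] l2 bnds by simp
  also have "\<dots> = log (real p) (real_of_int (l - 1))" by simp
  also have "\<dots> \<le> log (real p) (real_of_int l)"
    using l2 p7 log_le_cancel_iff[of "real p" "real_of_int (l - 1)" "real_of_int l"] by simp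
  finally show ?thesis .
qed

lemma TB_le: assumes "k \<ge> 1" shows "real (Tf pI (pI ^ 2 * k)) \<le> 2 + log (real p) (real_of_int k)"
proof -
  have m1: "pI ^ 2 * k \<ge> 1" using assms bnds by (smt (verit) mult_le_cancel_right1 one_le_power)
  have "real (Tf pI (pI ^ 2 * k)) \<le> log (real_of_int pI) (real_of_int (pI ^ 2 * k))" using T_log[of pI "pI ^ 2 * k"] m1 bnds by simp
  also have "\<dots> = log (real p) (real p ^ 2) + log (real p) (real_of_int k)"
    using assms p7 by (simp add: log_mult)
  also have "log (real p) (real p ^ 2) = 2" using p7 by (simp add: log_nat_power)
  finally show ?thesis by simp
qed

end

theorem lemma3p7:
  fixes p a s :: nat
  assumes "prime p" and "p \<ge> 7" and "1 \<le> a" and "a \<le> p - 4" and "s \<le> p - 2"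
  shows "\<exists>C1 C2 C3 :: real. C1 > 0 \<and> C2 > 0 \<and> C3 > 0 \<and>
    (\<forall>kb :: nat. \<forall>l :: int. 1 \<le> l \<and> l \<le> d_new p a s kb div 2 \<longrightarrow>
       0 \<le> - (C2 + C3 * (log (real p) (real_of_int l))\<^sup>2) + (real p + 1) * real_of_int l
     \<and> - (C2 + C3 * (log (real p) (real_of_int l))\<^sup>2) + (real p + 1) * real_of_int l
         \<le> 2 * (real p + 1) / (real p - 1) * (Delta p a s kb l - Delta p a s kb (l - 1))
     \<and> 2 * (real p + 1) / (real p - 1) * (Delta p a s kb l - Delta p a s kb (l - 1))
         \<le> (real p + 1) * real_of_int l
            + C1 * (log (real p) (real_of_int (wt p a s kb)))\<^sup>2)"
proof -
  interpret prm p a s using assms by unfold_locales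
  have pr: "real p \<ge> 7" using assms by simp
  define b where "b = (real p + 1) / (real p - 1)"
  have b: "0 < b" "b \<le> 3" using pr unfolding b_def by (simp_all add: divide_le_eq)
  have bp: "b * (real p - 1) = real p + 1" using pr unfolding b_def by simp
  have S: "2 * (real p + 1) / (real p - 1) = 2 * b" unfolding b_def by simp
  define x0 where "x0 = log (real p) 2"
  have x0: "x0 > 0" unfolding x0_def using pr by simp
  define A where "A = b * (real p + 30)"
  define B where "B = 8 * b"
  have AB: "A \<ge> 0" "B \<ge> 0" unfolding A_def B_def using b by simp_all
  define C1 where "C1 = A / x0\<^sup>2 + B / x0"
  have C1: "C1 > 0" unfolding C1_def using x0 b unfolding A_def B_def by (simp add: add_pos_pos)
  show ?thesis
  proof (rule exI[of _ C1], rule exI[of _ "real p + 1"], rule exI[of _ 1], intro conjI allI impI)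
    show "C1 > 0" by (rule C1)
    show "real p + 1 > 0" by simp
    show "(1::real) > 0" by simp
    fix kb :: nat and l :: int
    assume l: "1 \<le> l \<and> l \<le> d_new p a s kb div 2"
    define \<sigma> where "\<sigma> = Delta p a s kb l - Delta p a s kb (l - 1)"
    define x where "x = log (real p) (real_of_int l)"
    define k where "k = wt p a s kb"
    define y where "y = log (real p) (real_of_int k)"
    have lo: "2 * \<sigma> \<ge> (real p - 1) * real_of_int (l - 1) + 3 - 2 * real (Tf pI (l - 1))"
      using slope_bounds(1)[of l kb] l unfolding \<sigma>_def by simp
    have up: "2 * \<sigma> \<le> (real p - 1) * real_of_int l + real p + 14 + 8 * real (Tf pI (pI ^ 2 * k))"
      using slope_bounds(2)[of l kb] l unfolding \<sigma>_def k_def by simp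
    have Tl: "real (Tf pI (l - 1)) \<le> x" unfolding x_def using T_le_log l by simp
    have k2: "k \<ge> 2" unfolding k_def wt_def using ke_le bnds by (smt (verit) mult_nonneg_nonneg of_nat_0_le_iff)
    have TBk: "real (Tf pI (pI ^ 2 * k)) \<le> 2 + y" unfolding y_def using TB_le[of k] k2 by simp
    have y0: "x0 \<le> y" unfolding x0_def y_def using k2 pr by (subst log_le_cancel_iff) auto
    show "0 \<le> - (real p + 1 + 1 * x\<^sup>2) + (real p + 1) * real_of_int l"
      using log_sq_le[of "real p" "real_of_int l"] pr l unfolding x_def by (simp add: algebra_simps)
    have "b * (2 * \<sigma>) \<ge> b * ((real p - 1) * real_of_int (l - 1) + 3 - 2 * real (Tf pI (l - 1)))"
      using lo b by (intro mult_left_mono) auto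
    moreover have "b * ((real p - 1) * real_of_int (l - 1) + 3 - 2 * real (Tf pI (l - 1)))
        = (real p + 1) * real_of_int (l - 1) + b * (3 - 2 * real (Tf pI (l - 1)))"
    proof -
      have h: "b * ((real p - 1) * real_of_int (l - 1)) = (real p + 1) * real_of_int (l - 1)"
        by (simp add: mult.assoc[symmetric] bp)
      have "b * ((real p - 1) * real_of_int (l - 1) + 3 - 2 * real (Tf pI (l - 1)))
            = b * ((real p - 1) * real_of_int (l - 1)) + b * (3 - 2 * real (Tf pI (l - 1)))"
        by (simp add: algebra_simps)
      thus ?thesis unfolding h .
    qed
    moreover have "b * (3 - 2 * real (Tf pI (l - 1))) + x\<^sup>2 \<ge> 0" using quad_aux[OF b Tl] .
    ultimately have "b * (2 * \<sigma>) \<ge> (real p + 1) * real_of_int (l - 1) - x\<^sup>2" by linarith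
    thus "- (real p + 1 + 1 * x\<^sup>2) + (real p + 1) * real_of_int l \<le> 2 * (real p + 1) / (real p - 1) * \<sigma>"
      unfolding S by (simp add: algebra_simps)
    have "b * (2 * \<sigma>) \<le> b * ((real p - 1) * real_of_int l + real p + 14 + 8 * real (Tf pI (pI ^ 2 * k)))"
      using up b by (intro mult_left_mono) auto
    also have "\<dots> = (real p + 1) * real_of_int l + b * (real p + 14 + 8 * real (Tf pI (pI ^ 2 * k)))"
    proof -
      have h: "b * ((real p - 1) * real_of_int l) = (real p + 1) * real_of_int l"
        by (simp add: mult.assoc[symmetric] bp)
      have "b * ((real p - 1) * real_of_int l + real p + 14 + 8 * real (Tf pI (pI ^ 2 * k)))
            = b * ((real p - 1) * real_of_int l) + b * (real p + 14 + 8 * real (Tf pI (pI ^ 2 * k)))"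
        by (simp add: algebra_simps)
      thus ?thesis unfolding h .
    qed
    also have "\<dots> \<le> (real p + 1) * real_of_int l + (A + B * y)"
    proof -
      have "b * (real p + 14 + 8 * real (Tf pI (pI ^ 2 * k))) \<le> b * (real p + 14 + 8 * (2 + y))"
        using TBk b by (intro mult_left_mono) auto
      thus ?thesis unfolding A_def B_def by (simp add: algebra_simps)
    qed
    also have "\<dots> \<le> (real p + 1) * real_of_int l + C1 * y\<^sup>2"
      using lin_sq_aux[OF x0 y0 AB] unfolding C1_def by simp
    finally show "2 * (real p + 1) / (real p - 1) * \<sigma> \<le> (real p + 1) * real_of_int l + C1 * y\<^sup>2"
      unfolding S by (simp add: algebra_simps)
  qed
qed

end
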